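(* Let $T$ be a locally finite tree, $G\leq\mathrm{Aut}(T)$ a closed subgroup and $g\in G$ hyperbolic such that one of its two fixed points in $\partial T$ has an open stabiliser in $G$. The following are equivalent: (i) both fixed points of $g$ have open stabilisers in $G$; (ii) $g\in G_0$; (iii) $g$ normalises a compact open subgroup of $G$. In particular, if $g\in G_0$ is hyperbolic, then either both or none of its fixed points have an open stabiliser.
   Context: $\mathrm{Aut}(T)$ has the topology of pointwise convergence. A hyperbolic automorphism fixes no vertex or edge and fixes exactly two points of $\partial T$. $G_0$ is the kernel of the modular function of $G$. *)

theory Defs
  imports "HOL-Analysis.Analysis"
begin

definition is_cycle :: "('v \<Rightarrow> 'v \<Rightarrow> bool) \<Rightarrow> 'v list \<Rightarrow> bool" where
  "is_cycle E xs \<longleftrightarrow> length xs \<ge> 3 \<and> distinct xs \<and>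
     (\<forall>i. Suc i < length xs \<longrightarrow> E (xs ! i) (xs ! Suc i)) \<and> E (last xs) (hd xs)"

definition locally_finite_tree :: "('v \<Rightarrow> 'v \<Rightarrow> bool) \<Rightarrow> bool" where
  "locally_finite_tree E \<longleftrightarrow>
     (\<forall>x y. E x y \<longrightarrow> E y x) \<and> (\<forall>x. \<not> E x x) \<and>
     (\<forall>x y. (x, y) \<in> {(a, b). E a b}\<^sup>*) \<and>
     (\<forall>xs. \<not> is_cycle E xs) \<and>
     (\<forall>x. finite {y. E x y})"

definition aut :: "('v \<Rightarrow> 'v \<Rightarrow> bool) \<Rightarrow> ('v \<Rightarrow> 'v) set" where
  "aut E = {f. bij f \<and> (\<forall>x y. E x y \<longleftrightarrow> E (f x) (f y))}"

definition aut_top :: "('v \<Rightarrow> 'v \<Rightarrow> bool) \<Rightarrow> ('v \<Rightarrow> 'v) topology" where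
  "aut_top E = subtopology (product_topology (\<lambda>_. discrete_topology UNIV) UNIV) (aut E)"

definition aut_subgroup :: "('v \<Rightarrow> 'v \<Rightarrow> bool) \<Rightarrow> ('v \<Rightarrow> 'v) set \<Rightarrow> bool" where
  "aut_subgroup E H \<longleftrightarrow> H \<subseteq> aut E \<and> id \<in> H \<and>
     (\<forall>a\<in>H. \<forall>b\<in>H. a \<circ> b \<in> H) \<and> (\<forall>a\<in>H. inv a \<in> H)"

definition closed_subgroup :: "('v \<Rightarrow> 'v \<Rightarrow> bool) \<Rightarrow> ('v \<Rightarrow> 'v) set \<Rightarrow> bool" where
  "closed_subgroup E G \<longleftrightarrow> aut_subgroup E G \<and> closedin (aut_top E) G"

definition compact_open_subgroup ::
  "('v \<Rightarrow> 'v \<Rightarrow> bool) \<Rightarrow> ('v \<Rightarrow> 'v) set \<Rightarrow> ('v \<Rightarrow> 'v) set \<Rightarrow> bool" where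
  "compact_open_subgroup E G U \<longleftrightarrow> U \<subseteq> G \<and> aut_subgroup E U \<and>
     compactin (aut_top E) U \<and> openin (subtopology (aut_top E) G) U"

definition conj_set :: "('v \<Rightarrow> 'v) \<Rightarrow> ('v \<Rightarrow> 'v) set \<Rightarrow> ('v \<Rightarrow> 'v) set" where
  "conj_set g U = (\<lambda>u. g \<circ> u \<circ> inv g) ` U"

definition sg_index :: "('v \<Rightarrow> 'v) set \<Rightarrow> ('v \<Rightarrow> 'v) set \<Rightarrow> nat" where
  "sg_index A B = card ((\<lambda>a. (\<lambda>b. a \<circ> b) ` B) ` A)"

text \<open>For a t.d.l.c. group with compact open subgroup U,
  Delta(g) = [U : U \<inter> gUg^-1] / [gUg^-1 : U \<inter> gUg^-1].\<close>
definition modular_fn :: "('v \<Rightarrow> 'v \<Rightarrow> bool) \<Rightarrow> ('v \<Rightarrow> 'v) set \<Rightarrow> ('v \<Rightarrow> 'v) \<Rightarrow> real" where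
  "modular_fn E G g =
     (let U = (SOME U. compact_open_subgroup E G U) in
        real (sg_index U (U \<inter> conj_set g U)) /
        real (sg_index (conj_set g U) (U \<inter> conj_set g U)))"

definition G0 :: "('v \<Rightarrow> 'v \<Rightarrow> bool) \<Rightarrow> ('v \<Rightarrow> 'v) set \<Rightarrow> ('v \<Rightarrow> 'v) set" where
  "G0 E G = {g \<in> G. modular_fn E G g = 1}"

definition ray :: "('v \<Rightarrow> 'v \<Rightarrow> bool) \<Rightarrow> (nat \<Rightarrow> 'v) \<Rightarrow> bool" where
  "ray E r \<longleftrightarrow> inj r \<and> (\<forall>n. E (r n) (r (Suc n)))"

definition ray_equiv :: "(nat \<Rightarrow> 'v) \<Rightarrow> (nat \<Rightarrow> 'v) \<Rightarrow> bool" where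
  "ray_equiv r s \<longleftrightarrow> (\<exists>i j. \<forall>n. r (n + i) = s (n + j))"

definition fixes_end :: "('v \<Rightarrow> 'v) \<Rightarrow> (nat \<Rightarrow> 'v) \<Rightarrow> bool" where
  "fixes_end g r \<longleftrightarrow> ray_equiv (g \<circ> r) r"

definition end_stab :: "('v \<Rightarrow> 'v) set \<Rightarrow> (nat \<Rightarrow> 'v) \<Rightarrow> ('v \<Rightarrow> 'v) set" where
  "end_stab G r = {h \<in> G. fixes_end h r}"

definition hyperbolic :: "('v \<Rightarrow> 'v \<Rightarrow> bool) \<Rightarrow> ('v \<Rightarrow> 'v) \<Rightarrow> bool" where
  "hyperbolic E g \<longleftrightarrow> g \<in> aut E \<and>
     (\<forall>x. g x \<noteq> x) \<and>
     (\<forall>x y. E x y \<longrightarrow> \<not> (g x = y \<and> g y = x)) \<and>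
     (\<exists>r1 r2. ray E r1 \<and> ray E r2 \<and> \<not> ray_equiv r1 r2 \<and> fixes_end g r1 \<and> fixes_end g r2 \<and>
        (\<forall>r. ray E r \<and> fixes_end g r \<longrightarrow> ray_equiv r r1 \<or> ray_equiv r r2))"

end

theory Submission
  imports Defs
begin

abbreviation PT :: "('v \<Rightarrow> 'v) topology" where
  "PT \<equiv> product_topology (\<lambda>_. discrete_topology UNIV) UNIV"

lemma topspace_PT [simp]: "topspace PT = UNIV"
  by auto

lemma open_basic:
  assumes "finite F"
  shows "openin PT {f. \<forall>y\<in>F. f y = f0 y}"
proof -
  have eq: "{f. \<forall>y\<in>F. f y = f0 y} = PiE UNIV (\<lambda>y. if y \<in> F then {f0 y} else UNIV)"
    by (auto simp: PiE_def Pi_def extensional_def)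
  have "finite {i \<in> UNIV. (if i \<in> F then {f0 i} else UNIV) \<noteq> topspace (discrete_topology UNIV)}"
    by (rule finite_subset[OF _ assms]) auto
  then show ?thesis unfolding eq by (subst openin_PiE_gen) auto
qed

lemma aut_top_sub: "G \<subseteq> aut E \<Longrightarrow> subtopology (aut_top E) G = subtopology PT G"
  unfolding aut_top_def by (simp add: subtopology_subtopology Int_absorb1)

lemma aut_bij: "f \<in> aut E \<Longrightarrow> bij f" by (simp add: aut_def)
lemma aut_edge: "f \<in> aut E \<Longrightarrow> E x y \<longleftrightarrow> E (f x) (f y)" by (simp add: aut_def)
lemma aut_inv_r' [simp]: "f \<in> aut E \<Longrightarrow> f (inv f x) = x"
  by (simp add: aut_bij bij_is_surj surj_f_inv_f)
lemma aut_inv_l' [simp]: "f \<in> aut E \<Longrightarrow> inv f (f x) = x"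
  by (simp add: aut_bij bij_is_inj)
lemma aut_inv: "f \<in> aut E \<Longrightarrow> inv f \<in> aut E"
proof -
  assume f: "f \<in> aut E"
  have b: "bij f" using f by (simp add: aut_def)
  have "E x y \<longleftrightarrow> E (inv f x) (inv f y)" for x y
    using aut_edge[OF f, of "inv f x" "inv f y"] f by simp
  then show ?thesis using b by (simp add: aut_def bij_imp_bij_inv)
qed
lemma aut_comp: "f \<in> aut E \<Longrightarrow> g \<in> aut E \<Longrightarrow> f \<circ> g \<in> aut E"
  unfolding aut_def by (auto intro: bij_comp)
lemma aut_id: "id \<in> aut E" unfolding aut_def by auto
lemma aut_inv_r: "f \<in> aut E \<Longrightarrow> f \<circ> inv f = id"
  by (simp add: fun_eq_iff)
lemma aut_inv_l: "f \<in> aut E \<Longrightarrow> inv f \<circ> f = id"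
  by (simp add: fun_eq_iff)
lemma aut_inj: "f \<in> aut E \<Longrightarrow> f x = f y \<longleftrightarrow> x = y"
  by (metis aut_inv_l')
lemma aut_pow: "f \<in> aut E \<Longrightarrow> f ^^ n \<in> aut E"
  by (induction n) (simp_all add: aut_id aut_comp)

lemma subg_aut: "aut_subgroup E G \<Longrightarrow> h \<in> G \<Longrightarrow> h \<in> aut E"
  unfolding aut_subgroup_def by auto
lemma subg_comp: "aut_subgroup E G \<Longrightarrow> a \<in> G \<Longrightarrow> b \<in> G \<Longrightarrow> a \<circ> b \<in> G"
  unfolding aut_subgroup_def by auto
lemma subg_inv: "aut_subgroup E G \<Longrightarrow> a \<in> G \<Longrightarrow> inv a \<in> G"
  unfolding aut_subgroup_def by auto
lemma subg_id: "aut_subgroup E G \<Longrightarrow> id \<in> G"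
  unfolding aut_subgroup_def by auto
lemma subg_pow: "aut_subgroup E G \<Longrightarrow> a \<in> G \<Longrightarrow> a ^^ n \<in> G"
  by (induction n) (simp_all add: subg_id subg_comp)

definition fixG :: "('v \<Rightarrow> 'v) set \<Rightarrow> 'v set \<Rightarrow> ('v \<Rightarrow> 'v) set" where
  "fixG G F = {h \<in> G. \<forall>y\<in>F. h y = y}"

lemma fixG_subgroup: "aut_subgroup E G \<Longrightarrow> aut_subgroup E (fixG G F)"
proof -
  assume G: "aut_subgroup E G"
  have "inv a y = y" if "a \<in> G" "\<forall>y\<in>F. a y = y" "y \<in> F" for a y
  proof -
    have "a \<in> aut E" using G that(1) by (rule subg_aut)
    then have "inv a (a y) = y" by simp
    then show ?thesis using that by simp
  qed
  then show ?thesis using G unfolding aut_subgroup_def fixG_def by auto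
qed

lemma open_sub_iff:
  fixes E :: "'v \<Rightarrow> 'v \<Rightarrow> bool"
  assumes G: "aut_subgroup E G" and H: "aut_subgroup E H" "H \<subseteq> G"
  shows "openin (subtopology (aut_top E) G) H \<longleftrightarrow> (\<exists>F. finite F \<and> fixG G F \<subseteq> H)"
proof -
  have GA: "G \<subseteq> aut E" using G by (auto simp: aut_subgroup_def)
  have eq: "subtopology (aut_top E) G = subtopology PT G" by (rule aut_top_sub[OF GA])
  show ?thesis unfolding eq
  proof
    assume "openin (subtopology PT G) H"
    then obtain Op where O: "openin PT Op" "H = Op \<inter> G" by (auto simp: openin_subtopology)
    have "id \<in> Op" using O H subg_id by blast
    then obtain U :: "'v \<Rightarrow> 'v set" where U: "finite {i \<in> UNIV. U i \<noteq> topspace (discrete_topology UNIV)}"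
        "id \<in> PiE UNIV U" "PiE UNIV U \<subseteq> Op"
      using O(1) unfolding openin_product_topology_alt by blast
    define F where "F = {i \<in> UNIV. U i \<noteq> topspace (discrete_topology (UNIV::'v set))}"
    have "fixG G F \<subseteq> H"
    proof
      fix h assume h: "h \<in> fixG G F"
      have "h \<in> PiE UNIV U"
      proof (auto simp: PiE_def Pi_def extensional_def)
        fix x show "h x \<in> U x"
        proof (cases "x \<in> F")
          case True then have "h x = x" using h by (auto simp: fixG_def)
          then show ?thesis using U(2) by (auto simp: PiE_def)
        next
          case False then show ?thesis by (auto simp: F_def)
        qed
      qed
      then show "h \<in> H" using U(3) O(2) h by (auto simp: fixG_def)
    qed
    then show "\<exists>F. finite F \<and> fixG G F \<subseteq> H" using U(1) F_def by blast
  next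
    assume "\<exists>F. finite F \<and> fixG G F \<subseteq> H"
    then obtain F where F: "finite F" "fixG G F \<subseteq> H" by blast
    show "openin (subtopology PT G) H"
    proof (subst openin_subopen, intro ballI)
      fix h assume h: "h \<in> H"
      let ?T = "{f. \<forall>y\<in>F. f y = h y} \<inter> G"
      have "openin (subtopology PT G) ?T"
        using open_basic[OF F(1)] by (auto simp: openin_subtopology)
      moreover have "?T \<subseteq> H"
      proof
        fix f assume f: "f \<in> ?T"
        have hG: "h \<in> G" using h H by auto
        have "inv h \<circ> f \<in> G" using f hG G subg_comp subg_inv by blast
        then have "inv h \<circ> f \<in> fixG G F"
          using f subg_aut[OF G hG]
          by (auto simp: fixG_def)
        then have "inv h \<circ> f \<in> H" using F by auto
        then have "h \<circ> (inv h \<circ> f) \<in> H" using H h subg_comp by blast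
        moreover have "h \<circ> (inv h \<circ> f) = f"
          using subg_aut[OF G hG] by (auto simp: fun_eq_iff)
        ultimately show "f \<in> H" by simp
      qed
      ultimately show "\<exists>T. openin (subtopology PT G) T \<and> h \<in> T \<and> T \<subseteq> H" using h H by blast
    qed
  qed
qed

fun R :: "('v \<Rightarrow> 'v \<Rightarrow> bool) \<Rightarrow> nat \<Rightarrow> 'v \<Rightarrow> 'v set" where
  "R E 0 x = {x}"
| "R E (Suc n) x = R E n x \<union> {z. \<exists>y\<in>R E n x. E y z}"

lemma R_finite: "(\<forall>x. finite {y. E x y}) \<Longrightarrow> finite (R E n x)"
proof (induction n)
  case 0 then show ?case by simp
next
  case (Suc n)
  have eq: "{z. \<exists>y\<in>R E n x. E y z} = (\<Union>y\<in>R E n x. {z. E y z})" by auto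
  have "finite (\<Union>y\<in>R E n x. {z. E y z})"
    using Suc.IH[OF Suc.prems] Suc.prems by (intro finite_UN_I) auto
  then show ?case using Suc.IH[OF Suc.prems] by (simp only: R.simps eq finite_Un)
qed

lemma R_aut: "f \<in> aut E \<Longrightarrow> f ` R E n x \<subseteq> R E n (f x)"
proof (induction n)
  case 0 then show ?case by simp
next
  case (Suc n)
  show ?case
  proof
    fix w assume "w \<in> f ` R E (Suc n) x"
    then obtain u where u: "u \<in> R E (Suc n) x" "w = f u" by blast
    show "w \<in> R E (Suc n) (f x)"
    proof (cases "u \<in> R E n x")
      case True then show ?thesis using Suc u by auto
    next
      case False
      then obtain y where y: "y \<in> R E n x" "E y u" using u by auto
      have "E (f y) (f u)" using y(2) aut_edge[OF Suc.prems, of y u] by blast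
      moreover have "f y \<in> R E n (f x)" using Suc y by blast
      ultimately show ?thesis using u by auto
    qed
  qed
qed

lemma R_fix:
  assumes f: "f \<in> aut E" and x: "f x = x"
  shows "f ` R E n x = R E n x"
proof (rule equalityI)
  show "f ` R E n x \<subseteq> R E n x" using R_aut[OF f, of n x] x by simp
  have x': "inv f x = x" using x f by (metis aut_inv_l')
  have i: "inv f ` R E n x \<subseteq> R E n x" using R_aut[OF aut_inv[OF f], of n x] x' by simp
  show "R E n x \<subseteq> f ` R E n x"
  proof
    fix y assume "y \<in> R E n x"
    then have "inv f y \<in> R E n x" using i by blast
    moreover have "y = f (inv f y)" using f by simp
    ultimately show "y \<in> f ` R E n x" by blast
  qed
qed

lemma R_conn: "(x, y) \<in> {(a, b). E a b}\<^sup>* \<Longrightarrow> \<exists>n. y \<in> R E n x"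
proof (induction rule: rtrancl_induct)
  case base then show ?case by (intro exI[of _ 0]) simp
next
  case (step y z)
  then obtain n where "y \<in> R E n x" by blast
  then have "z \<in> R E (Suc n) x" using step by auto
  then show ?case by blast
qed

lemma lft_finite: "locally_finite_tree E \<Longrightarrow> finite (R E n x)"
  by (rule R_finite) (simp add: locally_finite_tree_def)
lemma lft_conn: "locally_finite_tree E \<Longrightarrow> \<exists>n. y \<in> R E n x"
  by (rule R_conn) (simp add: locally_finite_tree_def)

lemma nbhd_helper:
  assumes "finite F" "\<And>f'. \<forall>z\<in>F. f' z = f z \<Longrightarrow> f' \<notin> K"
  shows "\<exists>T. openin PT T \<and> f \<in> T \<and> T \<subseteq> topspace PT - K"
  using open_basic[OF assms(1), of f] assms(2) by (intro exI[of _ "{f'. \<forall>y\<in>F. f' y = f y}"]) auto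

lemma stab_compact:
  fixes E :: "'v \<Rightarrow> 'v \<Rightarrow> bool"
  assumes T: "locally_finite_tree E" and G: "closed_subgroup E G" and xS: "x \<in> S"
  shows "compactin (aut_top E) (fixG G S)"
proof -
  obtain C where C: "closedin PT C" "G = C \<inter> aut E"
    using G unfolding closed_subgroup_def aut_top_def closedin_subtopology by blast
  define K where "K = fixG G S"
  have K: "K = C \<inter> {f \<in> aut E. \<forall>y\<in>S. f y = y}" using C by (auto simp: K_def fixG_def)
  define nn where "nn y = (SOME n. y \<in> R E n x)" for y
  have nn: "y \<in> R E (nn y) x" for y using lft_conn[OF T, of y x] unfolding nn_def by (rule someI_ex)
  define B where "B y = R E (nn y) x" for y
  have KB: "K \<subseteq> PiE UNIV B"
  proof
    fix f assume f: "f \<in> K"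
    then have fa: "f \<in> aut E" "f x = x" using K xS by auto
    have "f y \<in> B y" for y using R_fix[OF fa, of "nn y"] nn[of y] unfolding B_def by blast
    then show "f \<in> PiE UNIV B" by (auto simp: PiE_def Pi_def extensional_def)
  qed
  have cB: "compactin PT (PiE UNIV B)"
    by (subst compactin_PiE) (auto simp: compactin_discrete_topology B_def lft_finite[OF T])
  have cl: "closedin PT K"
    unfolding closedin_def
  proof (intro conjI)
    show "K \<subseteq> topspace PT" by simp
    show "openin PT (topspace PT - K)"
    proof (subst openin_subopen, intro ballI)
      fix f assume "f \<in> topspace PT - K"
      then have fK: "f \<notin> K" by simp
      show "\<exists>T. openin PT T \<and> f \<in> T \<and> T \<subseteq> topspace PT - K"
      proof (cases "f \<in> C")
        case False
        then show ?thesis using C(1) K by (intro exI[of _ "UNIV - C"]) (auto simp: closedin_def)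
      next
        case fC: True
        show ?thesis
        proof (cases "\<exists>y\<in>S. f y \<noteq> y")
          case True
          then obtain y where y: "y \<in> S" "f y \<noteq> y" by blast
          show ?thesis using y K by (intro nbhd_helper[of "{y}"]) auto
        next
          case fS: False
          show ?thesis
          proof (cases "\<forall>a b. E a b \<longleftrightarrow> E (f a) (f b)")
            case False
            then obtain a b where ab: "\<not> (E a b \<longleftrightarrow> E (f a) (f b))" by blast
            show ?thesis
            proof (rule nbhd_helper[of "{a,b}"])
              fix f' assume "\<forall>z\<in>{a,b}. f' z = f z"
              then show "f' \<notin> K" using ab K aut_edge[of f' E a b] by auto
            qed simp
          next
            case fE: True
            show ?thesis
            proof (cases "inj f")
              case False
              then obtain a b where ab: "f a = f b" "a \<noteq> b" by (auto simp: inj_def)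
              show ?thesis
              proof (rule nbhd_helper[of "{a,b}"])
                fix f' assume "\<forall>z\<in>{a,b}. f' z = f z"
                then show "f' \<notin> K" using ab K aut_inj[of f' E a b] by auto
              qed simp
            next
              case fi: True
              show ?thesis
              proof (cases "surj f")
                case True
                then have "f \<in> K" using fi fE fS fC K by (auto simp: aut_def bij_def)
                then show ?thesis using fK by simp
              next
                case False
                then obtain z where z: "z \<notin> range f" by blast
                let ?T = "{f'. \<forall>w\<in>R E (nn z) x. f' w = f w}"
                show ?thesis
                proof (rule nbhd_helper[OF lft_finite[OF T]])
                  fix f' assume f': "\<forall>w\<in>R E (nn z) x. f' w = f w"
                  show "f' \<notin> K"
                  proof
                  assume "f' \<in> K"
                  then have fa: "f' \<in> aut E" "f' x = x" using K xS by auto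
                  have "z \<in> f' ` R E (nn z) x" using R_fix[OF fa, of "nn z"] nn[of z] by simp
                  then obtain w where w: "w \<in> R E (nn z) x" and zw: "z = f' w" by blast
                  have "f' w = f w" using f' w by blast
                  then have "z = f w" using zw by simp
                  then show False using z by simp
                  qed
                qed
              qed
            qed
          qed
        qed
      qed
    qed
  qed
  have "compactin PT K" by (rule closed_compactin[OF cB KB cl])
  moreover have "K \<subseteq> aut E" using K by auto
  ultimately show ?thesis unfolding K_def aut_top_def by (simp add: compactin_subtopology)
qed

lemma fixG_open:
  fixes E :: "'v \<Rightarrow> 'v \<Rightarrow> bool"
  assumes G: "aut_subgroup E G" and "finite S"
  shows "openin (subtopology (aut_top E) G) (fixG G S)"
  using assms by (subst open_sub_iff[OF G fixG_subgroup[OF G]]) (auto simp: fixG_def)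

lemma fixG_cos:
  fixes E :: "'v \<Rightarrow> 'v \<Rightarrow> bool"
  assumes T: "locally_finite_tree E" and G: "closed_subgroup E G" and "finite S" "S \<noteq> {}"
  shows "compact_open_subgroup E G (fixG G S)"
proof -
  have G': "aut_subgroup E G" using G by (simp add: closed_subgroup_def)
  obtain x where "x \<in> S" using assms by blast
  then have c: "compactin (aut_top E) (fixG G S)" by (rule stab_compact[OF T G])
  have s: "fixG G S \<subseteq> G" by (auto simp: fixG_def)
  show ?thesis unfolding compact_open_subgroup_def
    using c s fixG_open[OF G' assms(3)] fixG_subgroup[OF G'] by blast
qed

lemma cos_exists:
  fixes E :: "'v \<Rightarrow> 'v \<Rightarrow> bool"
  assumes T: "locally_finite_tree E" and G: "closed_subgroup E G"
  shows "\<exists>U. compact_open_subgroup E G U"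
  using fixG_cos[OF T G, of "{undefined}"] by blast

definition lc :: "('v \<Rightarrow> 'v) \<Rightarrow> ('v \<Rightarrow> 'v) set \<Rightarrow> ('v \<Rightarrow> 'v) set" where
  "lc a B = (\<lambda>b. a \<circ> b) ` B"

lemma sg_index_lc: "sg_index A B = card ((\<lambda>a. lc a B) ` A)"
  by (simp add: sg_index_def lc_def)

lemma lc_self:
  assumes Y: "aut_subgroup E Y" and y: "y \<in> Y"
  shows "lc y Y = Y"
proof
  show "lc y Y \<subseteq> Y" using Y y subg_comp by (auto simp: lc_def)
  show "Y \<subseteq> lc y Y"
  proof
    fix z assume z: "z \<in> Y"
    have ya: "y \<in> aut E" using Y y by (rule subg_aut)
    have "inv y \<circ> z \<in> Y" using Y y z subg_comp subg_inv by blast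
    moreover have "z = y \<circ> (inv y \<circ> z)" using ya by (auto simp: fun_eq_iff)
    ultimately show "z \<in> lc y Y" by (auto simp: lc_def)
  qed
qed

lemma lc_comp: "lc (a \<circ> b) Y = (\<lambda>f. a \<circ> f) ` lc b Y"
  by (auto simp: lc_def image_image comp_assoc)

lemma lc_mem:
  assumes Y: "aut_subgroup E Y" and c: "c \<in> lc a Y"
  shows "lc c Y = lc a Y"
proof -
  obtain y where y: "y \<in> Y" "c = a \<circ> y" using c by (auto simp: lc_def)
  have "lc c Y = (\<lambda>f. a \<circ> f) ` lc y Y" using y lc_comp by simp
  also have "\<dots> = lc a Y" using lc_self[OF Y y(1)] by (simp add: lc_def)
  finally show ?thesis .
qed

lemma lc_in: "aut_subgroup E Y \<Longrightarrow> a \<in> lc a Y"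
  unfolding lc_def by (rule image_eqI[of _ _ id]) (simp_all add: subg_id)

lemma lc_eq_iff:
  assumes Y: "aut_subgroup E Y" and a: "a \<in> aut E"
  shows "lc a Y = lc b Y \<longleftrightarrow> inv a \<circ> b \<in> Y"
proof
  assume "lc a Y = lc b Y"
  then have "b \<in> lc a Y" using lc_in[OF Y] by simp
  then obtain y where "y \<in> Y" "b = a \<circ> y" by (auto simp: lc_def)
  moreover have "inv a \<circ> (a \<circ> y) = y" using a by (auto simp: fun_eq_iff)
  ultimately show "inv a \<circ> b \<in> Y" by simp
next
  assume "inv a \<circ> b \<in> Y"
  moreover have "b = a \<circ> (inv a \<circ> b)" using a by (auto simp: fun_eq_iff)
  ultimately have "b \<in> lc a Y" by (auto simp: lc_def)
  then show "lc a Y = lc b Y" using lc_mem[OF Y, of b a] by simp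
qed

lemma inj_left_comp:
  assumes a: "a \<in> aut E"
  shows "inj (\<lambda>Q. (\<lambda>f. a \<circ> f) ` (Q :: ('v \<Rightarrow> 'v) set))"
proof (rule injI)
  fix P Q :: "('v \<Rightarrow> 'v) set"
  assume eq: "(\<lambda>f. a \<circ> f) ` P = (\<lambda>f. a \<circ> f) ` Q"
  have i: "inj (\<lambda>f::'v\<Rightarrow>'v. a \<circ> f)"
  proof (rule injI)
    fix f g :: "'v \<Rightarrow> 'v" assume "a \<circ> f = a \<circ> g"
    then have "inv a \<circ> (a \<circ> f) = inv a \<circ> (a \<circ> g)" by simp
    then show "f = g" using a by (simp add: fun_eq_iff)
  qed
  show "P = Q" using eq inj_image_eq_iff[OF i] by blast
qed

lemma index_mult:
  assumes X: "aut_subgroup E X" and Y: "aut_subgroup E Y" and Z: "aut_subgroup E Z"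
    and ZY: "Z \<subseteq> Y" and YX: "Y \<subseteq> X"
    and f1: "finite ((\<lambda>a. lc a Y) ` X)" and f2: "finite ((\<lambda>a. lc a Z) ` Y)"
  shows "sg_index X Z = sg_index X Y * sg_index Y Z"
proof -
  define fam where "fam P = (\<lambda>x. lc x Z) ` P" for P
  have cov: "(\<lambda>a. lc a Z) ` X = (\<Union>P\<in>(\<lambda>a. lc a Y) ` X. fam P)"
  proof
    show "(\<lambda>a. lc a Z) ` X \<subseteq> (\<Union>P\<in>(\<lambda>a. lc a Y) ` X. fam P)"
      using lc_in[OF Y] by (force simp: fam_def)
    show "(\<Union>P\<in>(\<lambda>a. lc a Y) ` X. fam P) \<subseteq> (\<lambda>a. lc a Z) ` X"
    proof clarify
      fix x0 Q assume x0: "x0 \<in> X" and Q: "Q \<in> fam (lc x0 Y)"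
      then obtain x where x: "x \<in> lc x0 Y" "Q = lc x Z" by (auto simp: fam_def)
      then obtain y where "y \<in> Y" "x = x0 \<circ> y" by (auto simp: lc_def)
      then have "x \<in> X" using x0 YX X subg_comp by blast
      then show "Q \<in> (\<lambda>a. lc a Z) ` X" using x by blast
    qed
  qed
  have famc: "fam (lc x0 Y) = (\<lambda>Q. (\<lambda>f. x0 \<circ> f) ` Q) ` ((\<lambda>a. lc a Z) ` Y)" for x0
    by (auto simp: fam_def lc_def image_image comp_assoc)
  have cardfam: "card (fam (lc x0 Y)) = sg_index Y Z" if "x0 \<in> X" for x0
  proof -
    have "x0 \<in> aut E" using X that by (rule subg_aut)
    then have "inj_on (\<lambda>Q. (\<lambda>f. x0 \<circ> f) ` Q) ((\<lambda>a. lc a Z) ` Y)"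
      using inj_on_subset[OF inj_left_comp subset_UNIV] by blast
    then show ?thesis unfolding famc sg_index_lc by (rule card_image)
  qed
  have finfam: "finite (fam (lc x0 Y))" for x0 unfolding famc using f2 by simp
  have disj: "fam P \<inter> fam P' = {}" if P: "P \<in> (\<lambda>a. lc a Y) ` X" and P': "P' \<in> (\<lambda>a. lc a Y) ` X"
    and ne: "P \<noteq> P'" for P P'
  proof (rule ccontr)
    assume "fam P \<inter> fam P' \<noteq> {}"
    then obtain x x' where x: "x \<in> P" "x' \<in> P'" "lc x Z = lc x' Z" by (auto simp: fam_def)
    obtain a where a: "a \<in> X" "P = lc a Y" using P by blast
    obtain a' where a': "a' \<in> X" "P' = lc a' Y" using P' by blast
    have "x' \<in> lc x Z" using x(3) lc_in[OF Z] by simp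
    then obtain z where "z \<in> Z" "x' = x \<circ> z" by (auto simp: lc_def)
    then have "x' \<in> lc x Y" using ZY by (auto simp: lc_def)
    then have "lc x' Y = lc x Y" by (rule lc_mem[OF Y])
    also have "lc x Y = P" using lc_mem[OF Y] x(1) a by simp
    finally have "P = lc x' Y" by simp
    moreover have "lc x' Y = P'" using lc_mem[OF Y] x(2) a' by simp
    ultimately show False using ne by simp
  qed
  have "sg_index X Z = card (\<Union>P\<in>(\<lambda>a. lc a Y) ` X. fam P)" unfolding sg_index_lc cov ..
  also have "\<dots> = (\<Sum>P\<in>(\<lambda>a. lc a Y) ` X. card (fam P))"
    by (rule card_UN_disjoint[OF f1]) (auto simp: finfam disj)
  also have "\<dots> = (\<Sum>P\<in>(\<lambda>a. lc a Y) ` X. sg_index Y Z)"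
    by (rule sum.cong) (auto simp: cardfam)
  also have "\<dots> = sg_index X Y * sg_index Y Z" by (simp add: sg_index_lc)
  finally show ?thesis .
qed

lemma index_pos:
  assumes X: "aut_subgroup E X" and f: "finite ((\<lambda>a. lc a Y) ` X)"
  shows "sg_index X Y > 0"
  using f subg_id[OF X] by (auto simp: sg_index_lc card_gt_0_iff)

lemma index_self:
  assumes X: "aut_subgroup E X"
  shows "sg_index X X = 1"
proof -
  have "(\<lambda>a. lc a X) ` X = {X}" using lc_self[OF X] subg_id[OF X] by auto
  then show ?thesis by (simp add: sg_index_lc)
qed

lemma index_one:
  assumes X: "aut_subgroup E X" and Y: "aut_subgroup E Y" and YX: "Y \<subseteq> X"
    and one: "sg_index X Y = 1"
  shows "X \<subseteq> Y"
proof
  fix b assume b: "b \<in> X"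
  obtain C where C: "(\<lambda>a. lc a Y) ` X = {C}" using one by (auto simp: sg_index_lc card_1_singleton_iff)
  have "lc id Y = C" "lc b Y = C" using C b subg_id[OF X] by auto
  then have "lc b Y = lc id Y" by simp
  moreover have "lc id Y = Y" by (simp add: lc_def)
  ultimately show "b \<in> Y" using lc_in[OF Y, of b] by simp
qed

definition good :: "('v \<Rightarrow> 'v \<Rightarrow> bool) \<Rightarrow> ('v \<Rightarrow> 'v) set \<Rightarrow> ('v \<Rightarrow> 'v) set \<Rightarrow> bool" where
  "good E G A \<longleftrightarrow> aut_subgroup E A \<and> A \<subseteq> G \<and> (\<forall>y. finite ((\<lambda>a. a y) ` A)) \<and>
     (\<exists>F. finite F \<and> fixG G F \<subseteq> A)"

lemma subg_Int: "aut_subgroup E A \<Longrightarrow> aut_subgroup E B \<Longrightarrow> aut_subgroup E (A \<inter> B)"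
  unfolding aut_subgroup_def by auto

lemma fin_index:
  fixes E :: "'v \<Rightarrow> 'v \<Rightarrow> bool"
  assumes G: "aut_subgroup E G" and A: "aut_subgroup E A" "A \<subseteq> G" "\<forall>y. finite ((\<lambda>a. a y) ` A)"
    and B: "aut_subgroup E B" and F: "finite F" "fixG G F \<subseteq> B"
  shows "finite ((\<lambda>a. lc a (A \<inter> B)) ` A)"
proof -
  have C: "aut_subgroup E (A \<inter> B)" using A(1) B by (rule subg_Int)
  define \<rho> where "\<rho> a = restrict a F" for a :: "'v \<Rightarrow> 'v"
  have key: "lc a (A \<inter> B) = lc a' (A \<inter> B)" if a: "a \<in> A" "a' \<in> A" "\<rho> a = \<rho> a'" for a a'
  proof -
    have aa: "a \<in> aut E" using A a subg_aut by blast
    have eq: "a y = a' y" if "y \<in> F" for y using a(3) that unfolding \<rho>_def by (metis restrict_apply')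
    have "inv a \<circ> a' \<in> A" using A a subg_comp subg_inv by blast
    moreover have "inv a \<circ> a' \<in> fixG G F"
    proof -
      have "inv a \<circ> a' \<in> G" using \<open>inv a \<circ> a' \<in> A\<close> A by blast
      moreover have "(inv a \<circ> a') y = y" if "y \<in> F" for y
      proof -
        have "(inv a \<circ> a') y = inv a (a y)" using eq[OF that] by simp
        then show ?thesis using aa by simp
      qed
      ultimately show ?thesis by (simp add: fixG_def)
    qed
    ultimately have "inv a \<circ> a' \<in> A \<inter> B" using F by blast
    then show ?thesis using lc_eq_iff[OF C aa] by simp
  qed
  have fin\<rho>: "finite (\<rho> ` A)"
  proof (rule finite_subset)
    show "\<rho> ` A \<subseteq> PiE F (\<lambda>y. (\<lambda>a. a y) ` A)" by (auto simp: \<rho>_def)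
    show "finite (PiE F (\<lambda>y. (\<lambda>a. a y) ` A))" using F(1) A(3) by (simp add: finite_PiE)
  qed
  define sel where "sel \<phi> = (SOME a. a \<in> A \<and> \<rho> a = \<phi>)" for \<phi>
  have "(\<lambda>a. lc a (A \<inter> B)) ` A \<subseteq> (\<lambda>\<phi>. lc (sel \<phi>) (A \<inter> B)) ` (\<rho> ` A)"
  proof
    fix Q assume "Q \<in> (\<lambda>a. lc a (A \<inter> B)) ` A"
    then obtain a where a: "a \<in> A" "Q = lc a (A \<inter> B)" by blast
    have "\<exists>a'. a' \<in> A \<and> \<rho> a' = \<rho> a" using a by blast
    then have s: "sel (\<rho> a) \<in> A \<and> \<rho> (sel (\<rho> a)) = \<rho> a" unfolding sel_def by (rule someI_ex)
    then have "Q = lc (sel (\<rho> a)) (A \<inter> B)" using key[of a "sel (\<rho> a)"] a by simp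
    then show "Q \<in> (\<lambda>\<phi>. lc (sel \<phi>) (A \<inter> B)) ` (\<rho> ` A)" using a by blast
  qed
  then show ?thesis using fin\<rho> finite_subset by blast
qed

lemma good_fin_index:
  fixes E :: "'v \<Rightarrow> 'v \<Rightarrow> bool"
  assumes G: "aut_subgroup E G" and A: "good E G A" and B: "good E G B"
  shows "finite ((\<lambda>a. lc a (A \<inter> B)) ` A)"
proof -
  obtain F where F: "finite F" "fixG G F \<subseteq> B" using B by (auto simp: good_def)
  show ?thesis using fin_index[OF G _ _ _ _ F] A B by (auto simp: good_def)
qed

lemma good_Int:
  fixes E :: "'v \<Rightarrow> 'v \<Rightarrow> bool"
  assumes A: "good E G A" and B: "good E G B"
  shows "good E G (A \<inter> B)"
proof -
  obtain F where F: "finite F" "fixG G F \<subseteq> A" using A by (auto simp: good_def)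
  obtain F' where F': "finite F'" "fixG G F' \<subseteq> B" using B by (auto simp: good_def)
  have "fixG G (F \<union> F') \<subseteq> A \<inter> B" using F F' by (auto simp: fixG_def)
  moreover have "finite ((\<lambda>a. a y) ` (A \<inter> B))" for y
    using A by (auto simp: good_def intro: finite_subset[of _ "(\<lambda>a. a y) ` A"])
  ultimately show ?thesis using A B F F' subg_Int by (auto simp: good_def)
qed

definition rho :: "('v \<Rightarrow> 'v) set \<Rightarrow> ('v \<Rightarrow> 'v) set \<Rightarrow> real" where
  "rho A B = real (sg_index A (A \<inter> B)) / real (sg_index B (A \<inter> B))"

lemma rho_via:
  fixes E :: "'v \<Rightarrow> 'v \<Rightarrow> bool"
  assumes G: "aut_subgroup E G" and A: "good E G A" and B: "good E G B" and W: "good E G W"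
    and WAB: "W \<subseteq> A \<inter> B"
  shows "rho A B = real (sg_index A W) / real (sg_index B W)"
    and "sg_index A W > 0" and "sg_index B W > 0"
proof -
  have sA: "aut_subgroup E A" and sB: "aut_subgroup E B" and sW: "aut_subgroup E W"
    using A B W by (auto simp: good_def)
  have AB: "good E G (A \<inter> B)" using A B by (rule good_Int)
  have sAB: "aut_subgroup E (A \<inter> B)" using AB by (simp add: good_def)
  have WW: "(A \<inter> B) \<inter> W = W" using WAB by blast
  have f1: "finite ((\<lambda>a. lc a (A \<inter> B)) ` A)" using good_fin_index[OF G A B] .
  have f1': "finite ((\<lambda>a. lc a (A \<inter> B)) ` B)" using good_fin_index[OF G B A] by (simp add: Int_commute)
  have f2: "finite ((\<lambda>a. lc a W) ` (A \<inter> B))" using good_fin_index[OF G AB W] WW by simp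
  have mA: "sg_index A W = sg_index A (A \<inter> B) * sg_index (A \<inter> B) W"
    by (rule index_mult[OF sA sAB sW WAB _ f1 f2]) blast
  have mB: "sg_index B W = sg_index B (A \<inter> B) * sg_index (A \<inter> B) W"
    by (rule index_mult[OF sB sAB sW WAB _ f1' f2]) blast
  have p1: "sg_index A (A \<inter> B) > 0" by (rule index_pos[OF sA f1])
  have p1': "sg_index B (A \<inter> B) > 0" by (rule index_pos[OF sB f1'])
  have p2: "sg_index (A \<inter> B) W > 0" by (rule index_pos[OF sAB f2])
  show "rho A B = real (sg_index A W) / real (sg_index B W)"
    unfolding rho_def mA mB using p2 by simp
  show "sg_index A W > 0" "sg_index B W > 0" unfolding mA mB using p1 p1' p2 by simp_all
qed

lemma rho_cocycle:
  fixes E :: "'v \<Rightarrow> 'v \<Rightarrow> bool"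
  assumes G: "aut_subgroup E G" and A: "good E G A" and B: "good E G B" and C: "good E G C"
  shows "rho A B * rho B C = rho A C"
proof -
  define W where "W = A \<inter> B \<inter> C"
  have W: "good E G W" unfolding W_def using good_Int[OF good_Int[OF A B] C] .
  have r1: "rho A B = real (sg_index A W) / real (sg_index B W)"
    using rho_via(1)[OF G A B W] by (auto simp: W_def)
  have r2: "rho B C = real (sg_index B W) / real (sg_index C W)" and pB: "sg_index B W > 0"
    using rho_via[OF G B C W] by (auto simp: W_def)
  have r3: "rho A C = real (sg_index A W) / real (sg_index C W)"
    using rho_via(1)[OF G A C W] by (auto simp: W_def)
  show ?thesis unfolding r1 r2 r3 using pB by simp
qed

lemma rho_self: "aut_subgroup E A \<Longrightarrow> rho A A = 1"
  by (simp add: rho_def index_self)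

lemma rho_sub_one:
  fixes E :: "'v \<Rightarrow> 'v \<Rightarrow> bool"
  assumes G: "aut_subgroup E G" and A: "good E G A" and B: "good E G B" and AB: "A \<subseteq> B"
    and r: "rho A B = 1"
  shows "A = B"
proof -
  have sA: "aut_subgroup E A" and sB: "aut_subgroup E B" using A B by (auto simp: good_def)
  have i: "A \<inter> B = A" using AB by blast
  have "sg_index B A = 1" using r rho_via(3)[OF G A B A] i index_self[OF sA]
    by (simp add: rho_def i index_self[OF sA])
  then have "B \<subseteq> A" using index_one[OF sB sA AB] by simp
  then show ?thesis using AB by blast
qed

lemma cj_comp: "g \<in> aut E \<Longrightarrow> (g \<circ> u \<circ> inv g) \<circ> (g \<circ> v \<circ> inv g) = g \<circ> (u \<circ> v) \<circ> inv g"
  by (simp add: fun_eq_iff)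

lemma cj_inj: "g \<in> aut E \<Longrightarrow> g \<circ> u \<circ> inv g = g \<circ> v \<circ> inv g \<Longrightarrow> u = v"
proof -
  assume g: "g \<in> aut E" and e: "g \<circ> u \<circ> inv g = g \<circ> v \<circ> inv g"
  have "u x = v x" for x
  proof -
    have "(g \<circ> u \<circ> inv g) (g x) = (g \<circ> v \<circ> inv g) (g x)" using e by simp
    then have "g (u x) = g (v x)" using g by simp
    then show ?thesis using aut_inj[OF g] by blast
  qed
  then show "u = v" by (simp add: fun_eq_iff)
qed

lemma cj_inv: "g \<in> aut E \<Longrightarrow> u \<in> aut E \<Longrightarrow> inv (g \<circ> u \<circ> inv g) = g \<circ> inv u \<circ> inv g"
proof -
  assume g: "g \<in> aut E" and u: "u \<in> aut E"
  have "(g \<circ> u \<circ> inv g) \<circ> (g \<circ> inv u \<circ> inv g) = id" using g u by (simp add: fun_eq_iff)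
  moreover have "(g \<circ> inv u \<circ> inv g) \<circ> (g \<circ> u \<circ> inv g) = id" using g u by (simp add: fun_eq_iff)
  ultimately show ?thesis by (rule inv_unique_comp)
qed

lemma conj_subgroup:
  assumes A: "aut_subgroup E A" and g: "g \<in> aut E"
  shows "aut_subgroup E (conj_set g A)"
  unfolding aut_subgroup_def
proof (intro conjI ballI)
  show "conj_set g A \<subseteq> aut E"
    using aut_comp[OF aut_comp[OF g subg_aut[OF A]] aut_inv[OF g]] by (auto simp: conj_set_def)
  have "g \<circ> id \<circ> inv g = id" using g by (simp add: fun_eq_iff)
  then show "id \<in> conj_set g A" using subg_id[OF A] unfolding conj_set_def by (metis image_eqI)
next
  fix a b assume "a \<in> conj_set g A" "b \<in> conj_set g A"
  then obtain u v where "u \<in> A" "v \<in> A" "a = g \<circ> u \<circ> inv g" "b = g \<circ> v \<circ> inv g"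
    by (auto simp: conj_set_def)
  then show "a \<circ> b \<in> conj_set g A" using cj_comp[OF g] subg_comp[OF A]
    unfolding conj_set_def by (metis image_eqI)
next
  fix a assume "a \<in> conj_set g A"
  then obtain u where u: "u \<in> A" "a = g \<circ> u \<circ> inv g" by (auto simp: conj_set_def)
  then have "inv a = g \<circ> inv u \<circ> inv g" using cj_inv[OF g subg_aut[OF A u(1)]] by simp
  then show "inv a \<in> conj_set g A" using subg_inv[OF A u(1)] unfolding conj_set_def by (metis image_eqI)
qed

lemma conj_Int: "g \<in> aut E \<Longrightarrow> conj_set g (A \<inter> B) = conj_set g A \<inter> conj_set g B"
  unfolding conj_set_def using cj_inj by blast

lemma conj_inj_set: "g \<in> aut E \<Longrightarrow> inj (conj_set g)"
proof (rule injI)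
  fix P Q assume g: "g \<in> aut E" and e: "conj_set g P = conj_set g Q"
  have i: "inj (\<lambda>u. g \<circ> u \<circ> inv g)" using cj_inj[OF g] by (rule injI)
  show "P = Q" using e inj_image_eq_iff[OF i] unfolding conj_set_def by blast
qed

lemma lc_conj: "g \<in> aut E \<Longrightarrow> lc (g \<circ> x \<circ> inv g) (conj_set g Y) = conj_set g (lc x Y)"
  unfolding lc_def conj_set_def image_image using cj_comp by (metis (no_types, lifting) image_cong)

lemma index_conj:
  assumes g: "g \<in> aut E"
  shows "sg_index (conj_set g X) (conj_set g Y) = sg_index X Y"
proof -
  have "(\<lambda>a. lc a (conj_set g Y)) ` conj_set g X = conj_set g ` ((\<lambda>a. lc a Y) ` X)"
    unfolding conj_set_def[of g X] image_image using lc_conj[OF g] by simp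
  then show ?thesis unfolding sg_index_lc
    using card_image[OF inj_on_subset[OF conj_inj_set[OF g] subset_UNIV]] by simp
qed

lemma rho_conj:
  assumes g: "g \<in> aut E"
  shows "rho (conj_set g A) (conj_set g B) = rho A B"
  unfolding rho_def conj_Int[OF g, symmetric] index_conj[OF g] ..

lemma conj_conj:
  assumes g: "g \<in> aut E" and h: "h \<in> aut E"
  shows "conj_set g (conj_set h A) = conj_set (g \<circ> h) A"
proof -
  have "inv (g \<circ> h) = inv h \<circ> inv g" using g h by (simp add: aut_bij o_inv_distrib)
  then show ?thesis unfolding conj_set_def image_image by (simp add: comp_assoc)
qed

lemma conj_id: "conj_set id A = A"
  by (simp add: conj_set_def)

lemma conj_inv_cancel:
  assumes g: "g \<in> aut E"
  shows "conj_set g (conj_set (inv g) A) = A" "conj_set (inv g) (conj_set g A) = A"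
  using conj_conj[OF g aut_inv[OF g], of A] conj_conj[OF aut_inv[OF g] g, of A]
    aut_inv_r[OF g] aut_inv_l[OF g] by (simp_all add: conj_id)

lemma good_conj:
  fixes E :: "'v \<Rightarrow> 'v \<Rightarrow> bool"
  assumes G: "aut_subgroup E G" and A: "good E G A" and gG: "g \<in> G"
  shows "good E G (conj_set g A)"
proof -
  have g: "g \<in> aut E" using G gG by (rule subg_aut)
  have sA: "aut_subgroup E A" and AG: "A \<subseteq> G" and bA: "\<forall>y. finite ((\<lambda>a. a y) ` A)"
    using A by (auto simp: good_def)
  obtain F where F: "finite F" "fixG G F \<subseteq> A" using A by (auto simp: good_def)
  have s: "aut_subgroup E (conj_set g A)" by (rule conj_subgroup[OF sA g])
  have sub: "conj_set g A \<subseteq> G"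
    using AG gG subg_comp[OF G] subg_inv[OF G] by (auto simp: conj_set_def)
  have b: "finite ((\<lambda>a. a y) ` conj_set g A)" for y
  proof -
    have "(\<lambda>a. a y) ` conj_set g A = g ` ((\<lambda>a. a (inv g y)) ` A)"
      by (auto simp: conj_set_def image_image)
    then show ?thesis using bA by simp
  qed
  have o: "fixG G (g ` F) \<subseteq> conj_set g A"
  proof
    fix h assume h: "h \<in> fixG G (g ` F)"
    have hG: "h \<in> G" using h by (simp add: fixG_def)
    have "inv g \<circ> h \<circ> g \<in> G" using hG gG subg_comp[OF G] subg_inv[OF G] by blast
    moreover have "(inv g \<circ> h \<circ> g) y = y" if "y \<in> F" for y
      using h that g by (auto simp: fixG_def)
    ultimately have "inv g \<circ> h \<circ> g \<in> A" using F by (auto simp: fixG_def)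
    moreover have "h = g \<circ> (inv g \<circ> h \<circ> g) \<circ> inv g" using g by (simp add: fun_eq_iff)
    ultimately show "h \<in> conj_set g A" unfolding conj_set_def by blast
  qed
  show ?thesis unfolding good_def using s sub b o F(1) by blast
qed

lemma cos_good:
  fixes E :: "'v \<Rightarrow> 'v \<Rightarrow> bool"
  assumes G: "aut_subgroup E G" and U: "compact_open_subgroup E G U"
  shows "good E G U"
proof -
  have sU: "aut_subgroup E U" and UG: "U \<subseteq> G" and c: "compactin (aut_top E) U"
    and o: "openin (subtopology (aut_top E) G) U"
    using U by (auto simp: compact_open_subgroup_def)
  obtain F where F: "finite F" "fixG G F \<subseteq> U" using o open_sub_iff[OF G sU UG] by blast
  have b: "finite ((\<lambda>a. a y) ` U)" for y
  proof -
    have "continuous_map (aut_top E) (discrete_topology UNIV) (\<lambda>f. f y)"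
      unfolding aut_top_def
      by (rule continuous_map_from_subtopology) (rule continuous_map_product_projection, simp)
    then have "compactin (discrete_topology UNIV) ((\<lambda>a. a y) ` U)" using image_compactin[OF c] by blast
    then show ?thesis by (simp add: compactin_discrete_topology)
  qed
  show ?thesis unfolding good_def using sU UG b F by blast
qed

lemma modular_eq:
  fixes E :: "'v \<Rightarrow> 'v \<Rightarrow> bool"
  assumes T: "locally_finite_tree E" and G: "closed_subgroup E G" and gG: "g \<in> G"
    and V: "good E G V"
  shows "modular_fn E G g = rho V (conj_set g V)"
proof -
  have G': "aut_subgroup E G" using G by (simp add: closed_subgroup_def)
  have g: "g \<in> aut E" using G' gG by (rule subg_aut)
  define U where "U = (SOME U. compact_open_subgroup E G U)"
  have "compact_open_subgroup E G U" unfolding U_def using cos_exists[OF T G] by (rule someI_ex)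
  then have U: "good E G U" by (rule cos_good[OF G'])
  have gU: "good E G (conj_set g U)" and gV: "good E G (conj_set g V)"
    using good_conj[OF G' U gG] good_conj[OF G' V gG] .
  have m: "modular_fn E G g = rho U (conj_set g U)"
    unfolding modular_fn_def rho_def U_def Let_def by simp
  have c1: "rho V U * rho U (conj_set g U) = rho V (conj_set g U)" by (rule rho_cocycle[OF G' V U gU])
  have c2: "rho V (conj_set g U) * rho (conj_set g U) (conj_set g V) = rho V (conj_set g V)"
    by (rule rho_cocycle[OF G' V gU gV])
  have c3: "rho V U * rho U V = 1" using rho_cocycle[OF G' V U V] rho_self[of E V] V
    by (simp add: good_def)
  have c4: "rho (conj_set g U) (conj_set g V) = rho U V" by (rule rho_conj[OF g])
  have "rho V (conj_set g V) = rho U (conj_set g U) * (rho V U * rho U V)"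
    using c1 c2 c4 by (simp flip: c2 c1 add: mult_ac)
  then show ?thesis using m c3 by simp
qed

lemma successively_nth: "successively P xs \<Longrightarrow> Suc i < length xs \<Longrightarrow> P (xs ! i) (xs ! Suc i)"
proof (induction P xs arbitrary: i rule: successively.induct)
  case (3 P x y xs)
  then show ?case by (cases i) auto
qed auto

lemma successively_map_upt:
  assumes "\<And>t. E (f t) (f (Suc t))"
  shows "successively E (map f [a..<b])"
proof (induction b)
  case 0 then show ?case by simp
next
  case (Suc b)
  show ?case
  proof (cases "a \<le> b")
    case True
    have "map f [a..<Suc b] = map f [a..<b] @ [f b]" using True by simp
    moreover have "[a..<b] \<noteq> [] \<Longrightarrow> E (last (map f [a..<b])) (f b)"
      using assms[of "b - 1"] by (simp add: last_map)
    ultimately show ?thesis using Suc by (auto simp: successively_append_iff)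
  next
    case False
    then show ?thesis by simp
  qed
qed

lemma lft_sym: "locally_finite_tree E \<Longrightarrow> E x y \<Longrightarrow> E y x"
  by (simp add: locally_finite_tree_def)

lemma lft_nocycle: "locally_finite_tree E \<Longrightarrow> \<not> is_cycle E xs"
  by (simp add: locally_finite_tree_def)

lemma hd_last_distinct:
  assumes "distinct ys" "ys \<noteq> []" "hd ys = last ys"
  shows "ys = [hd ys]"
proof (cases ys)
  case (Cons y ys')
  show ?thesis
  proof (cases ys')
    case Nil then show ?thesis using Cons by simp
  next
    case (Cons y' ys'')
    then have "last ys \<in> set ys'" using \<open>ys = y # ys'\<close> by simp
    then show ?thesis using assms \<open>ys = y # ys'\<close> by simp
  qed
qed (use assms in simp)

lemma tree_path_unique:
  assumes T: "locally_finite_tree E"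
  shows "distinct xs \<Longrightarrow> successively E xs \<Longrightarrow> xs \<noteq> [] \<Longrightarrow>
         distinct ys \<Longrightarrow> successively E ys \<Longrightarrow> ys \<noteq> [] \<Longrightarrow>
         hd xs = hd ys \<Longrightarrow> last xs = last ys \<Longrightarrow> xs = ys"
proof (induction xs arbitrary: ys)
  case Nil then show ?case by simp
next
  case (Cons a xs')
  obtain ys' where ys: "ys = a # ys'" using Cons.prems(6,7) by (cases ys) auto
  show ?case
  proof (cases xs')
    case Nil
    then have "hd ys = last ys" using Cons.prems ys by simp
    then have "ys = [hd ys]" using hd_last_distinct Cons.prems by blast
    then show ?thesis using Nil ys by simp
  next
    case (Cons x' xs'')
    note xs' = this
    show ?thesis
    proof (cases ys')
      case Nil
      then have "last xs' = a" using Cons.prems(8) ys xs' by simp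
      moreover have "last xs' \<in> set xs'" using xs' by simp
      ultimately show ?thesis using Cons.prems(1) by simp
    next
      case (Cons y' ys'')
      note ys' = this
      show ?thesis
      proof (cases "x' = y'")
        case True
        have "xs' = ys'"
          using Cons.IH[of ys'] Cons.prems xs' ys' ys True
          by (auto simp: successively_Cons)
        then show ?thesis using ys by simp
      next
        case ne: False
        have lastin: "last xs' \<in> set ys'"
          using Cons.prems(8) xs' ys' ys by simp
        have "last xs' \<in> set xs'" using xs' by simp
        then have "\<exists>v\<in>set xs'. v \<in> set ys'" using lastin by blast
        then obtain A z rest where xsplit: "xs' = A @ z # rest" and zY: "z \<in> set ys'"
          and AY: "\<forall>v\<in>set A. v \<notin> set ys'"
          using split_list_first_prop[of xs' "\<lambda>v. v \<in> set ys'"] by blast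
        obtain B rest' where ysplit: "ys' = B @ z # rest'" and zB: "z \<notin> set B"
          using split_list_first[OF zY] by blast
        define c where "c = a # A @ [z] @ rev B"
        have dx: "distinct (a # A @ z # rest)" using Cons.prems(1) xsplit by simp
        have dy: "distinct (a # B @ z # rest')" using Cons.prems(4) ys ysplit by simp
        have sx: "successively E (a # A @ z # rest)" using Cons.prems(2) xsplit by simp
        have sy: "successively E (a # B @ z # rest')" using Cons.prems(5) ys ysplit by simp
        have AB: "set A \<inter> set B = {}" using AY ysplit by auto
        have dc: "distinct c" unfolding c_def using dx dy AB zB by auto
        have "a # A @ z # rest = (a # A @ [z]) @ rest" by simp
        then have s1: "successively E (a # A @ [z])"
          using sx successively_append_iff[of E "a # A @ [z]" rest] by simp
        have s1': "successively E ((a # A) @ [z])" using s1 by simp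
        have "a # B @ z # rest' = [a] @ (B @ [z]) @ rest'" by simp
        then have sB: "successively E (B @ [z])"
          using sy successively_append_iff[of E "[a]" "(B @ [z]) @ rest'"]
            successively_append_iff[of E "B @ [z]" rest'] by simp
        have sym: "\<And>x y. E x y \<Longrightarrow> E y x" using lft_sym[OF T] by blast
        have sBr: "successively E (rev (B @ [z]))"
          unfolding successively_rev by (rule successively_mono[OF sB]) (rule sym)
        have sBr': "successively E (z # rev B)" using sBr by simp
        have p1: "successively E (a # A)" and p2: "E (last (a # A)) z"
          using s1' successively_append_iff[of E "a # A" "[z]"] by simp_all
        have ceq: "c = (a # A) @ (z # rev B)" unfolding c_def by simp
        have sc: "successively E c"
          unfolding ceq successively_append_iff[of E "a # A" "z # rev B"] using p1 p2 sBr' by simp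
        have hdy: "hd ys' = y'" using ys' by simp
        have close: "E (last c) (hd c)"
        proof (cases "B = []")
          case True
          then have "z = y'" using ysplit ys' by simp
          moreover have "E a y'" using Cons.prems(5) ys ys' by simp
          ultimately show ?thesis unfolding c_def using True sym by simp
        next
          case False
          then have "hd B = y'" using ysplit ys' by (cases B) auto
          moreover have "E a y'" using Cons.prems(5) ys ys' by simp
          ultimately show ?thesis unfolding c_def using False sym by (simp add: last_rev)
        qed
        have len: "length c \<ge> 3"
        proof (cases "B = []")
          case True
          then have "z = y'" using ysplit ys' by simp
          then have "A \<noteq> []" using xsplit xs' ne by auto
          then show ?thesis unfolding c_def by (cases A) auto
        next
          case False
          then show ?thesis unfolding c_def by (cases B) auto
        qed
        have "is_cycle E c"
          unfolding is_cycle_def using len dc successively_nth[OF sc] close by blast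
        then show ?thesis using lft_nocycle[OF T] by blast
      qed
    qed
  qed
qed

lemma ray_inj: "ray E p \<Longrightarrow> p x = p y \<longleftrightarrow> x = y"
  by (auto simp: ray_def inj_def)

lemma ray_edge: "ray E p \<Longrightarrow> E (p n) (p (Suc n))"
  by (simp add: ray_def)

lemma fix_ray_tail:
  assumes T: "locally_finite_tree E" and p: "ray E p" and h: "h \<in> aut E"
    and hk: "h (p k) = p k" and fe: "fixes_end h p" and km: "k \<le> m"
  shows "h (p m) = p m"
proof -
  obtain i j where ij: "\<And>n. h (p (n + i)) = p (n + j)"
    using fe unfolding fixes_end_def ray_equiv_def by auto
  define n where "n = m + k"
  define xs where "xs = map (h \<circ> p) [k..<n+i+1]"
  define ys where "ys = map p [k..<n+j+1]"
  have injhp: "inj (h \<circ> p)" using ray_inj[OF p] aut_inj[OF h] by (auto simp: inj_def)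
  have dx: "distinct xs" unfolding xs_def using injhp by (simp add: distinct_map inj_on_subset[OF injhp])
  have dy: "distinct ys" unfolding ys_def using p by (simp add: distinct_map inj_on_def ray_inj)
  have sx: "successively E xs" unfolding xs_def
    by (rule successively_map_upt) (use aut_edge[OF h] ray_edge[OF p] in auto)
  have sy: "successively E ys" unfolding ys_def
    by (rule successively_map_upt) (use ray_edge[OF p] in auto)
  have k1: "k < n + i + 1" "k < n + j + 1" unfolding n_def using km by auto
  have nx: "xs \<noteq> []" "ys \<noteq> []" unfolding xs_def ys_def using k1 by auto
  have u1: "[k..<n+i+1] = k # [Suc k..<n+i+1]" using k1(1) by (rule upt_conv_Cons)
  have u2: "[k..<n+j+1] = k # [Suc k..<n+j+1]" using k1(2) by (rule upt_conv_Cons)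
  have hd: "hd xs = hd ys" unfolding xs_def ys_def u1 u2 using hk by simp
  have lx: "last xs = h (p (n + i))" unfolding xs_def using k1 by (simp add: last_map)
  have ly: "last ys = p (n + j)" unfolding ys_def using k1 by (simp add: last_map)
  have "last xs = last ys" using lx ly ij by simp
  then have "xs = ys" using tree_path_unique[OF T dx sx nx(1) dy sy nx(2) hd] by simp
  then have "xs ! (m - k) = ys ! (m - k)" by simp
  moreover have "m - k < n + i + 1 - k" "m - k < n + j + 1 - k" unfolding n_def using km by auto
  ultimately show ?thesis unfolding xs_def ys_def using km by (simp del: upt_Suc)
qed

lemma re_sym: "ray_equiv p q \<Longrightarrow> ray_equiv q p"
  unfolding ray_equiv_def by metis

lemma re_trans: "ray_equiv p q \<Longrightarrow> ray_equiv q s \<Longrightarrow> ray_equiv p s"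
proof -
  assume "ray_equiv p q" "ray_equiv q s"
  then obtain a b c d where 1: "\<And>n. p (n + a) = q (n + b)" and 2: "\<And>n. q (n + c) = s (n + d)"
    unfolding ray_equiv_def by blast
  have "p (n + (a + c)) = s (n + (b + d))" for n
  proof -
    have "p (n + (a + c)) = p ((n + c) + a)" by (simp add: ac_simps)
    also have "\<dots> = q ((n + c) + b)" by (rule 1)
    also have "\<dots> = q ((n + b) + c)" by (simp add: ac_simps)
    also have "\<dots> = s ((n + b) + d)" by (rule 2)
    finally show ?thesis by (simp add: ac_simps)
  qed
  then show ?thesis unfolding ray_equiv_def by blast
qed

lemma fixes_end_cong:
  assumes pq: "ray_equiv p q" and fe: "fixes_end h p"
  shows "fixes_end h q"
proof -
  obtain a b where 1: "\<And>n. p (n + a) = q (n + b)" using pq unfolding ray_equiv_def by blast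
  obtain i j where 2: "\<And>n. h (p (n + i)) = p (n + j)" using fe unfolding fixes_end_def ray_equiv_def by auto
  have "h (q (n + (b + i))) = q (n + (b + j))" for n
  proof -
    have "q (n + (b + i)) = p (n + i + a)" using 1[of "n + i"] by (simp add: ac_simps)
    moreover have "h (p (n + a + i)) = p (n + a + j)" using 2[of "n + a"] .
    moreover have "p (n + j + a) = q (n + (b + j))" using 1[of "n + j"] by (simp add: ac_simps)
    ultimately show ?thesis by (simp add: ac_simps)
  qed
  then show ?thesis unfolding fixes_end_def ray_equiv_def by auto
qed

lemma end_stab_cong: "ray_equiv p q \<Longrightarrow> end_stab G p = end_stab G q"
  unfolding end_stab_def using fixes_end_cong re_sym by blast

lemma fixes_end_pointwise: "(\<And>n. n \<ge> k \<Longrightarrow> h (p n) = p n) \<Longrightarrow> fixes_end h p"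
  unfolding fixes_end_def ray_equiv_def by (intro exI[of _ k]) auto

lemma fixes_end_inv:
  assumes h: "h \<in> aut E" and fe: "fixes_end h p"
  shows "fixes_end (inv h) p"
proof -
  obtain i j where 2: "\<And>n. h (p (n + i)) = p (n + j)" using fe unfolding fixes_end_def ray_equiv_def by auto
  have "inv h (p (n + j)) = p (n + i)" for n using 2[of n] h by (metis aut_inv_l')
  then show ?thesis unfolding fixes_end_def ray_equiv_def by auto
qed

lemma end_stab_subgroup:
  assumes G: "aut_subgroup E G"
  shows "aut_subgroup E (end_stab G p)"
  unfolding aut_subgroup_def
proof (intro conjI ballI)
  show "end_stab G p \<subseteq> aut E" using G by (auto simp: end_stab_def aut_subgroup_def)
  show "id \<in> end_stab G p" using subg_id[OF G]
    by (auto simp: end_stab_def fixes_end_def ray_equiv_def)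
next
  fix a b assume a: "a \<in> end_stab G p" and b: "b \<in> end_stab G p"
  obtain i j where 1: "\<And>n. a (p (n + i)) = p (n + j)" using a unfolding end_stab_def fixes_end_def ray_equiv_def by auto
  obtain k l where 2: "\<And>n. b (p (n + k)) = p (n + l)" using b unfolding end_stab_def fixes_end_def ray_equiv_def by auto
  have "(a \<circ> b) (p (n + (k + i))) = p (n + (l + j))" for n
    using 2[of "n + i"] 1[of "n + l"] by (simp add: ac_simps)
  then have "fixes_end (a \<circ> b) p" unfolding fixes_end_def ray_equiv_def by auto
  then show "a \<circ> b \<in> end_stab G p" using a b subg_comp[OF G] by (auto simp: end_stab_def)
next
  fix a assume a: "a \<in> end_stab G p"
  then have "fixes_end (inv a) p" using fixes_end_inv[OF subg_aut[OF G]] by (auto simp: end_stab_def)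
  then show "inv a \<in> end_stab G p" using a subg_inv[OF G] by (auto simp: end_stab_def)
qed

lemma fs: "(f ^^ Suc n) x = (f ^^ n) (f x)"
  by (simp add: funpow_Suc_right del: funpow.simps)

lemma pow_inv_r: "a \<in> aut E \<Longrightarrow> (a ^^ N) ((inv a ^^ N) y) = y"
proof (induction N arbitrary: y)
  case 0 then show ?case by simp
next
  case (Suc N)
  have "(a ^^ Suc N) ((inv a ^^ Suc N) y) = (a ^^ N) (a (inv a ((inv a ^^ N) y)))"
    unfolding fs[where f=a and n=N] by simp
  also have "\<dots> = y" using Suc by simp
  finally show ?case .
qed

lemma pow_inv_l: "a \<in> aut E \<Longrightarrow> (inv a ^^ N) ((a ^^ N) y) = y"
proof (induction N arbitrary: y)
  case 0 then show ?case by simp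
next
  case (Suc N)
  have "(inv a ^^ Suc N) ((a ^^ Suc N) y) = (inv a ^^ N) (inv a (a ((a ^^ N) y)))"
    unfolding fs[where f="inv a" and n=N] by simp
  also have "\<dots> = y" using Suc by simp
  finally show ?case .
qed

lemma pow_inj:
  assumes a: "a \<in> aut E" and e: "(a ^^ N) x = (a ^^ N) y"
  shows "x = y"
proof -
  have "(a ^^ N) \<in> aut E" by (rule aut_pow[OF a])
  then show ?thesis using aut_inj e by fastforce
qed

lemma pow_p:
  assumes sh: "\<And>m. m \<ge> i \<Longrightarrow> a (p m) = p (m + c)" and m: "m \<ge> i"
  shows "(a ^^ t) (p m) = p (m + t * c)"
proof (induction t)
  case 0 then show ?case by simp
next
  case (Suc t)
  have "(a ^^ Suc t) (p m) = a (p (m + t * c))" using Suc by simp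
  also have "\<dots> = p (m + t * c + c)" using sh m by simp
  finally show ?case by (simp add: ac_simps)
qed

definition mkray :: "('v \<Rightarrow> 'v) \<Rightarrow> (nat \<Rightarrow> 'v) \<Rightarrow> nat \<Rightarrow> nat \<Rightarrow> nat \<Rightarrow> 'v" where
  "mkray a p i c n = (inv a ^^ (n div c + 1)) (p (i + c - n mod c))"

lemma arith_K:
  fixes n c N i :: nat
  assumes c: "c > 0" and N: "n div c + 1 \<le> N"
  shows "i + c - n mod c + (N - (n div c + 1)) * c = i + N * c - n"
proof -
  define d where "d = n div c"
  define e where "e = n mod c"
  define t where "t = N - (d + 1)"
  have n: "n = d * c + e" unfolding d_def e_def by simp
  have e: "e < c" unfolding e_def using c by simp
  have Nt: "N = d + 1 + t" unfolding t_def d_def using N by simp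
  have Nc: "N * c = d * c + c + t * c" unfolding Nt by (simp add: algebra_simps)
  have t': "N - (d + 1) = t" using Nt by simp
  have "i + c - e + t * c = i + (d * c + c + t * c) - (d * c + e)" using e by simp
  then show ?thesis unfolding d_def[symmetric] e_def[symmetric] t' Nc[symmetric] n[symmetric] .
qed

locale shiftray =
  fixes E :: "'v \<Rightarrow> 'v \<Rightarrow> bool" and a :: "'v \<Rightarrow> 'v" and p :: "nat \<Rightarrow> 'v" and i c :: nat
  assumes T: "locally_finite_tree E" and a: "a \<in> aut E" and p: "ray E p" and c: "c > 0"
    and sh: "\<And>m. m \<ge> i \<Longrightarrow> a (p m) = p (m + c)"
begin

abbreviation r where "r \<equiv> mkray a p i c"

lemma pw: "m \<ge> i \<Longrightarrow> (a ^^ t) (p m) = p (m + t * c)"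
proof (induction t)
  case 0 then show ?case by simp
next
  case (Suc t)
  have "(a ^^ Suc t) (p m) = a (p (m + t * c))" using Suc by simp
  also have "\<dots> = p (m + t * c + c)" using sh Suc.prems by simp
  finally show ?case by (simp add: ac_simps)
qed

lemma K:
  assumes N: "n div c + 1 \<le> N"
  shows "(a ^^ N) (r n) = p (i + N * c - n)"
proof -
  define Q where "Q = n div c + 1"
  have NQ: "N = (N - Q) + Q" using N unfolding Q_def by simp
  have ii: "i \<le> i + c - n mod c" using mod_less_divisor[OF c, of n] by arith
  have "(a ^^ N) (r n) = (a ^^ (N - Q)) ((a ^^ Q) ((inv a ^^ Q) (p (i + c - n mod c))))"
    unfolding mkray_def Q_def[symmetric] by (subst NQ) (simp only: funpow_add comp_apply)
  also have "\<dots> = (a ^^ (N - Q)) (p (i + c - n mod c))" using pow_inv_r[OF a] by simp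
  also have "\<dots> = p (i + c - n mod c + (N - Q) * c)" by (rule pw[OF ii])
  also have "\<dots> = p (i + N * c - n)" unfolding Q_def using arith_K[OF c N] by simp
  finally show ?thesis .
qed

lemma Nbig: "n div c + 1 \<le> n + 1"
  using c by (simp add: div_le_dividend)

lemma Nc: "N \<le> N * c"
  using c by simp

lemma r_inj: "inj r"
proof (rule injI)
  fix n m assume e: "r n = r m"
  define N where "N = n + m + 1"
  have N1: "n div c + 1 \<le> N" "m div c + 1 \<le> N" unfolding N_def using div_le_dividend[of n c] div_le_dividend[of m c] by (simp_all only:)
  have "p (i + N * c - n) = p (i + N * c - m)" using K[OF N1(1)] K[OF N1(2)] e by simp
  then have "i + N * c - n = i + N * c - m" using ray_inj[OF p] by simp
  moreover have "n \<le> N * c" "m \<le> N * c" using Nc[of N] unfolding N_def by auto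
  ultimately show "n = m" by simp
qed

lemma r_edge: "E (r n) (r (Suc n))"
proof -
  define N where "N = n + 2"
  have N1: "n div c + 1 \<le> N" "Suc n div c + 1 \<le> N" unfolding N_def using div_le_dividend[of n c] div_le_dividend[of "Suc n" c] by (simp_all only:)
  have le: "Suc n \<le> N * c" using Nc[of N] unfolding N_def by simp
  have eq: "i + N * c - n = Suc (i + N * c - Suc n)" using le by simp
  have "E (p (i + N * c - Suc n)) (p (i + N * c - n))" unfolding eq by (rule ray_edge[OF p])
  then have "E (p (i + N * c - n)) (p (i + N * c - Suc n))" using lft_sym[OF T] by blast
  then have "E ((a ^^ N) (r n)) ((a ^^ N) (r (Suc n)))" using K[OF N1(1)] K[OF N1(2)] by simp
  then show ?thesis using aut_edge[OF aut_pow[OF a]] by blast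
qed

lemma r_ray: "ray E r"
  unfolding ray_def using r_inj r_edge by blast

lemma r_shift: "a (r (n + c)) = r n"
proof -
  define N where "N = n + c + 1"
  have N1: "n div c + 1 \<le> N" "(n + c) div c + 1 \<le> Suc N"
    unfolding N_def using div_le_dividend[of n c] div_le_dividend[of "n + c" c] by (simp_all only:)
  have "(a ^^ N) (a (r (n + c))) = (a ^^ Suc N) (r (n + c))"
    by (rule fs[symmetric])
  also have "\<dots> = p (i + Suc N * c - (n + c))" by (rule K[OF N1(2)])
  also have "\<dots> = p (i + N * c - n)" by simp
  also have "\<dots> = (a ^^ N) (r n)" using K[OF N1(1)] by simp
  finally show ?thesis using pow_inj[OF a] by blast
qed

lemma r_fixes: "fixes_end a r"
  unfolding fixes_end_def ray_equiv_def using r_shift by (intro exI[of _ c] exI[of _ 0]) auto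

lemma r_to_p:
  assumes n: "n \<le> c"
  shows "a (r n) = p (i + c - n)"
proof -
  define N where "N = n + 1"
  have N1: "n div c + 1 \<le> Suc N" unfolding N_def using div_le_dividend[of n c] by (simp_all only:)
  have "(a ^^ N) (a (r n)) = (a ^^ Suc N) (r n)"
    by (rule fs[symmetric])
  also have "\<dots> = p (i + Suc N * c - n)" by (rule K[OF N1])
  also have "\<dots> = p (i + c - n + N * c)" using n by (simp add: add.assoc)
  also have "\<dots> = (a ^^ N) (p (i + c - n))" using pw[of "i + c - n" N] n by simp
  finally show ?thesis using pow_inj[OF a] by blast
qed

lemma r_not_p: "\<not> ray_equiv r p"
proof
  assume "ray_equiv r p"
  then obtain I J where IJ: "\<And>n. r (n + I) = p (n + J)" unfolding ray_equiv_def by blast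
  define n where "n = i + 1"
  define N where "N = n + I + 1"
  have N1: "(n + I) div c + 1 \<le> N" unfolding N_def using div_le_dividend[of "n + I" c] by (simp_all only:)
  have "p (i + N * c - (n + I)) = (a ^^ N) (p (n + J))" using K[OF N1] IJ[of n] by simp
  also have "\<dots> = p (n + J + N * c)" by (rule pw) (simp add: n_def)
  finally have "i + N * c - (n + I) = n + J + N * c" using ray_inj[OF p] by simp
  then show False unfolding n_def by simp
qed

lemma r_mem: "r n = (inv a ^^ N) (p (i + N * c - n))" if "n div c + 1 \<le> N"
  using K[OF that] pow_inv_l[OF a, of N "r n"] by simp

end

lemma n_le_Nc: "c > 0 \<Longrightarrow> n \<le> (n div c + 1) * (c::nat)"
proof -
  assume c: "c > 0"
  have e: "n div c * c + n mod c = n" by (rule div_mult_mod_eq)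
  have l: "n mod c < c" using c by simp
  have "(n div c + 1) * c = n div c * c + c" by (simp add: algebra_simps)
  then show ?thesis using e l by linarith
qed

lemma conj_iter:
  assumes a: "a \<in> aut E" and W: "\<And>h. h \<in> W \<Longrightarrow> a \<circ> h \<circ> inv a \<in> W" and h: "h \<in> W"
  shows "(a ^^ N) \<circ> h \<circ> (inv a ^^ N) \<in> W"
proof (induction N)
  case 0 then show ?case using h by simp
next
  case (Suc N)
  have eq: "(a ^^ Suc N) \<circ> h \<circ> (inv a ^^ Suc N) = a \<circ> ((a ^^ N) \<circ> h \<circ> (inv a ^^ N)) \<circ> inv a"
  proof (rule ext)
    fix x
    show "((a ^^ Suc N) \<circ> h \<circ> (inv a ^^ Suc N)) x = (a \<circ> ((a ^^ N) \<circ> h \<circ> (inv a ^^ N)) \<circ> inv a) x"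
      by (simp add: funpow_swap1)
  qed
  show ?case unfolding eq by (rule W[OF Suc])
qed

locale core = shiftray +
  fixes G and q
  assumes G: "closed_subgroup E G" and aG: "a \<in> G"
    and hcl: "\<And>s. ray E s \<Longrightarrow> fixes_end a s \<Longrightarrow> ray_equiv s p \<or> ray_equiv s q"
begin

lemma G': "aut_subgroup E G" using G by (simp add: closed_subgroup_def)

lemma r_q: "ray_equiv r q"
  using hcl[OF r_ray r_fixes] r_not_p by blast

lemma es_r_q: "end_stab G r = end_stab G q"
  by (rule end_stab_cong[OF r_q])

lemma es_sub: "end_stab G s \<subseteq> G" by (auto simp: end_stab_def)

lemma open_es_iff:
  "openin (subtopology (aut_top E) G) (end_stab G s) \<longleftrightarrow> (\<exists>F. finite F \<and> fixG G F \<subseteq> end_stab G s)"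
  by (rule open_sub_iff[OF G' end_stab_subgroup[OF G'] es_sub])

lemma tail_fix:
  assumes T': "ray E s" and F: "fixG G F \<subseteq> end_stab G s" and h: "h \<in> fixG G (F \<union> {s k})"
    and m: "k \<le> m"
  shows "h (s m) = s m"
proof -
  have hG: "h \<in> G" using h by (simp add: fixG_def)
  have "h \<in> fixG G F" using h by (auto simp: fixG_def)
  then have "fixes_end h s" using F by (auto simp: end_stab_def)
  moreover have "h (s k) = s k" using h by (simp add: fixG_def)
  ultimately show ?thesis using fix_ray_tail[OF T T' subg_aut[OF G' hG] _ _ m] by blast
qed

lemma cos_of:
  assumes F: "finite F" and sub: "fixG G F \<subseteq> fixG G S" and x: "x \<in> S"
  shows "compact_open_subgroup E G (fixG G S)"
proof -
  have c: "compactin (aut_top E) (fixG G S)" by (rule stab_compact[OF T G x])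
  have sg: "aut_subgroup E (fixG G S)" by (rule fixG_subgroup[OF G'])
  have s: "fixG G S \<subseteq> G" by (auto simp: fixG_def)
  have o: "openin (subtopology (aut_top E) G) (fixG G S)"
    using open_sub_iff[OF G' sg s] F sub by blast
  show ?thesis unfolding compact_open_subgroup_def using c sg s o by blast
qed

lemma C1:
  assumes O1: "openin (subtopology (aut_top E) G) (end_stab G p)"
    and M: "modular_fn E G a = 1"
  shows "openin (subtopology (aut_top E) G) (end_stab G q)"
proof -
  obtain F where F: "finite F" "fixG G F \<subseteq> end_stab G p" using O1 open_es_iff by blast
  define S where "S = p ` {i..}"
  define W where "W = fixG G S"
  have WF: "fixG G (F \<union> {p i}) \<subseteq> W"
  proof
    fix h assume h: "h \<in> fixG G (F \<union> {p i})"
    have "h (p m) = p m" if "m \<ge> i" for m using tail_fix[OF p F(2) h that] .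
    then show "h \<in> W" using h unfolding W_def S_def fixG_def by auto
  qed
  have Wc: "compact_open_subgroup E G W" unfolding W_def
    by (rule cos_of[of "F \<union> {p i}"]) (use F WF in \<open>auto simp: W_def S_def\<close>)
  have Wg: "good E G W" by (rule cos_good[OF G' Wc])
  have aWg: "good E G (conj_set a W)" by (rule good_conj[OF G' Wg aG])
  have WaW: "W \<subseteq> conj_set a W"
  proof
    fix h assume h: "h \<in> W"
    have hG: "h \<in> G" using h by (simp add: W_def fixG_def)
    have "inv a \<circ> h \<circ> a \<in> G" using hG aG subg_comp[OF G'] subg_inv[OF G'] by blast
    moreover have "(inv a \<circ> h \<circ> a) (p m) = p m" if "m \<ge> i" for m
    proof -
      have "h (p (m + c)) = p (m + c)" using h that by (auto simp: W_def S_def fixG_def)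
      moreover have "inv a (p (m + c)) = p m" using sh[OF that, symmetric] a by simp
      ultimately show ?thesis using sh[OF that] by simp
    qed
    ultimately have "inv a \<circ> h \<circ> a \<in> W" by (auto simp: W_def S_def fixG_def)
    moreover have "h = a \<circ> (inv a \<circ> h \<circ> a) \<circ> inv a" using a by (simp add: fun_eq_iff)
    ultimately show "h \<in> conj_set a W" unfolding conj_set_def by blast
  qed
  have "rho W (conj_set a W) = 1" using modular_eq[OF T G aG Wg] M by simp
  then have WeqW: "W = conj_set a W" by (rule rho_sub_one[OF G' Wg aWg WaW])
  have step: "a \<circ> h \<circ> inv a \<in> W" if "h \<in> W" for h
    using that WeqW unfolding conj_set_def by blast
  have fixr: "h (r n) = r n" if h: "h \<in> W" for h n
  proof -
    define N where "N = n div c + 1"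
    have nN: "n \<le> N * c" unfolding N_def by (rule n_le_Nc[OF c])
    define y where "y = p (i + N * c - n)"
    have yS: "y \<in> S" unfolding y_def S_def using nN by auto
    have rn: "r n = (inv a ^^ N) y" unfolding y_def by (rule r_mem) (simp add: N_def)
    have "((a ^^ N) \<circ> h \<circ> (inv a ^^ N)) \<in> W" by (rule conj_iter[OF a step h])
    then have "(a ^^ N) (h ((inv a ^^ N) y)) = y" using yS by (auto simp: W_def fixG_def)
    also have "y = (a ^^ N) ((inv a ^^ N) y)" using pow_inv_r[OF a] by simp
    finally have "h ((inv a ^^ N) y) = (inv a ^^ N) y" by (rule pow_inj[OF a])
    then show ?thesis using rn by simp
  qed
  have "W \<subseteq> end_stab G q"
  proof
    fix h assume h: "h \<in> W"
    then have "fixes_end h r" using fixr by (intro fixes_end_pointwise) auto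
    moreover have "h \<in> G" using h by (simp add: W_def fixG_def)
    ultimately show "h \<in> end_stab G q" using es_r_q by (auto simp: end_stab_def)
  qed
  then have "fixG G (F \<union> {p i}) \<subseteq> end_stab G q" using WF by blast
  then show ?thesis using open_es_iff F(1) by blast
qed

lemma aS:
  defines "S \<equiv> p ` {i..} \<union> range r"
  shows "a ` S = S"
proof
  show "a ` S \<subseteq> S"
  proof
    fix x assume "x \<in> a ` S"
    then obtain s where s: "s \<in> S" "x = a s" by blast
    show "x \<in> S"
    proof (cases "s \<in> p ` {i..}")
      case True
      then obtain m where "m \<ge> i" "s = p m" by auto
      then show ?thesis using s sh unfolding S_def by auto
    next
      case False
      then obtain n where n: "s = r n" using s unfolding S_def by auto
      show ?thesis
      proof (cases "n \<ge> c")
        case True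
        then have "r n = r ((n - c) + c)" by simp
        then have "x = r (n - c)" using s n r_shift[of "n - c"] by simp
        then show ?thesis unfolding S_def by auto
      next
        case False
        then have "x = p (i + c - n)" using s n r_to_p by simp
        moreover have "i + c - n \<in> {i..}" using False by simp
        ultimately show ?thesis unfolding S_def by blast
      qed
    qed
  qed
  show "S \<subseteq> a ` S"
  proof
    fix x assume x: "x \<in> S"
    show "x \<in> a ` S"
    proof (cases "x \<in> p ` {i..}")
      case True
      then obtain m where m: "m \<ge> i" "x = p m" by auto
      show ?thesis
      proof (cases "m \<ge> i + c")
        case True
        then have "a (p (m - c)) = p m" using sh[of "m - c"] by simp
        moreover have "p (m - c) \<in> S" using True unfolding S_def by auto
        ultimately show ?thesis using m by (intro image_eqI[of x a "p (m - c)"]) auto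
      next
        case False
        then have "a (r (i + c - m)) = p m" using r_to_p[of "i + c - m"] m by simp
        moreover have "r (i + c - m) \<in> S" unfolding S_def by auto
        ultimately show ?thesis using m by (intro image_eqI[of x a "r (i + c - m)"]) auto
      qed
    next
      case False
      then obtain n where n: "x = r n" using x unfolding S_def by auto
      have "a (r (n + c)) = x" using r_shift n by simp
      moreover have "r (n + c) \<in> S" unfolding S_def by auto
      ultimately show ?thesis by (intro image_eqI[of x a "r (n + c)"]) auto
    qed
  qed
qed

lemma C2:
  assumes O1: "openin (subtopology (aut_top E) G) (end_stab G p)"
    and O2: "openin (subtopology (aut_top E) G) (end_stab G q)"
  shows "\<exists>U. compact_open_subgroup E G U \<and> conj_set a U = U"
proof -
  obtain F1 where F1: "finite F1" "fixG G F1 \<subseteq> end_stab G p" using O1 open_es_iff by blast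
  obtain F2 where F2: "finite F2" "fixG G F2 \<subseteq> end_stab G r" using O2 open_es_iff es_r_q by auto
  define S where "S = p ` {i..} \<union> range r"
  define U where "U = fixG G S"
  have UF: "fixG G (F1 \<union> F2 \<union> {p i, r 0}) \<subseteq> U"
  proof
    fix h assume h: "h \<in> fixG G (F1 \<union> F2 \<union> {p i, r 0})"
    have h1: "h \<in> fixG G (F1 \<union> {p i})" using h by (auto simp: fixG_def)
    have h2: "h \<in> fixG G (F2 \<union> {r 0})" using h by (auto simp: fixG_def)
    have "h (p m) = p m" if "m \<ge> i" for m using tail_fix[OF p F1(2) h1 that] .
    moreover have "h (r n) = r n" for n using tail_fix[OF r_ray F2(2) h2, of n] by simp
    ultimately show "h \<in> U" using h unfolding U_def S_def fixG_def by auto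
  qed
  have Uc: "compact_open_subgroup E G U" unfolding U_def
    by (rule cos_of[of "F1 \<union> F2 \<union> {p i, r 0}"]) (use F1 F2 UF in \<open>auto simp: U_def S_def\<close>)
  have aS': "a ` S = S" unfolding S_def by (rule aS)
  have inS: "inv a y \<in> S" if "y \<in> S" for y
  proof -
    have "y \<in> a ` S" using that aS' by simp
    then obtain s where s: "s \<in> S" "y = a s" by (rule imageE)
    have "inv a y = s" using s(2) a by simp
    then show ?thesis using s(1) by simp
  qed
  have aS2: "a y \<in> S" if "y \<in> S" for y
  proof -
    have "a y \<in> a ` S" using that by (rule imageI)
    then show ?thesis using aS' by simp
  qed
  have c1: "a \<circ> h \<circ> inv a \<in> U" if h: "h \<in> U" for h
  proof -
    have hG: "h \<in> G" using h by (simp add: U_def fixG_def)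
    have "a \<circ> h \<circ> inv a \<in> G" using hG aG subg_comp[OF G'] subg_inv[OF G'] by blast
    moreover have "(a \<circ> h \<circ> inv a) y = y" if "y \<in> S" for y
    proof -
      have "h (inv a y) = inv a y" using h inS[OF that] by (simp add: U_def fixG_def)
      then show ?thesis using a by simp
    qed
    ultimately show ?thesis by (simp add: U_def fixG_def)
  qed
  have c2: "inv a \<circ> h \<circ> a \<in> U" if h: "h \<in> U" for h
  proof -
    have hG: "h \<in> G" using h by (simp add: U_def fixG_def)
    have "inv a \<circ> h \<circ> a \<in> G" using hG aG subg_comp[OF G'] subg_inv[OF G'] by blast
    moreover have "(inv a \<circ> h \<circ> a) y = y" if "y \<in> S" for y
    proof -
      have "h (a y) = a y" using h aS2[OF that] by (simp add: U_def fixG_def)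
      then show ?thesis using a by simp
    qed
    ultimately show ?thesis by (simp add: U_def fixG_def)
  qed
  have "conj_set a U = U"
  proof
    show "conj_set a U \<subseteq> U" using c1 by (auto simp: conj_set_def)
    show "U \<subseteq> conj_set a U"
    proof
      fix h assume h: "h \<in> U"
      have "h = a \<circ> (inv a \<circ> h \<circ> a) \<circ> inv a" using a by (simp add: fun_eq_iff)
      then show "h \<in> conj_set a U" using c2[OF h] unfolding conj_set_def by blast
    qed
  qed
  then show ?thesis using Uc by blast
qed

end

lemma mod_inv:
  fixes E :: "'v \<Rightarrow> 'v \<Rightarrow> bool"
  assumes T: "locally_finite_tree E" and G: "closed_subgroup E G" and gG: "g \<in> G"
  shows "modular_fn E G (inv g) = 1 \<longleftrightarrow> modular_fn E G g = 1"
proof -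
  have G': "aut_subgroup E G" using G by (simp add: closed_subgroup_def)
  have g: "g \<in> aut E" using G' gG by (rule subg_aut)
  have giG: "inv g \<in> G" using G' gG by (rule subg_inv)
  obtain U where "compact_open_subgroup E G U" using cos_exists[OF T G] by blast
  then have V: "good E G U" by (rule cos_good[OF G'])
  have gV: "good E G (conj_set g U)" by (rule good_conj[OF G' V gG])
  have m1: "modular_fn E G g = rho U (conj_set g U)" by (rule modular_eq[OF T G gG V])
  have "modular_fn E G (inv g) = rho U (conj_set (inv g) U)" by (rule modular_eq[OF T G giG V])
  also have "\<dots> = rho (conj_set g U) (conj_set g (conj_set (inv g) U))" by (rule rho_conj[OF g, symmetric])
  also have "\<dots> = rho (conj_set g U) U" using conj_inv_cancel[OF g] by simp
  finally have m2: "modular_fn E G (inv g) = rho (conj_set g U) U" .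
  have "rho U (conj_set g U) * rho (conj_set g U) U = rho U U" by (rule rho_cocycle[OF G' V gV V])
  also have "\<dots> = 1" using V rho_self[of E U] by (simp add: good_def)
  finally have "modular_fn E G g * modular_fn E G (inv g) = 1" using m1 m2 by simp
  then show ?thesis by auto
qed

lemma N_inv:
  assumes g: "g \<in> aut E"
  shows "(\<exists>U. compact_open_subgroup E G U \<and> conj_set (inv g) U = U) \<longleftrightarrow>
         (\<exists>U. compact_open_subgroup E G U \<and> conj_set g U = U)"
proof -
  have "conj_set (inv g) U = U \<longleftrightarrow> conj_set g U = U" for U
  proof
    assume "conj_set (inv g) U = U"
    then have "conj_set g (conj_set (inv g) U) = conj_set g U" by simp
    then show "conj_set g U = U" using conj_inv_cancel[OF g] by simp
  next
    assume "conj_set g U = U"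
    then have "conj_set (inv g) (conj_set g U) = conj_set (inv g) U" by simp
    then show "conj_set (inv g) U = U" using conj_inv_cancel[OF g] by simp
  qed
  then show ?thesis by simp
qed

lemma direction:
  assumes g: "g \<in> aut E" and nf: "\<forall>x. g x \<noteq> x" and fe: "fixes_end g p"
  shows "\<exists>a\<in>{g, inv g}. \<exists>i c. c > 0 \<and> (\<forall>m. m \<ge> i \<longrightarrow> a (p m) = p (m + c))"
proof -
  obtain i j where ij: "\<And>n. g (p (n + i)) = p (n + j)"
    using fe unfolding fixes_end_def ray_equiv_def by auto
  have "i \<noteq> j" using ij[of 0] nf by auto
  then consider "i < j" | "j < i" by linarith
  then show ?thesis
  proof cases
    case 1
    have "\<forall>m. m \<ge> i \<longrightarrow> g (p m) = p (m + (j - i))"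
    proof (intro allI impI)
      fix m assume "m \<ge> i"
      then show "g (p m) = p (m + (j - i))" using ij[of "m - i"] 1 by simp
    qed
    then have "\<exists>i c. c > 0 \<and> (\<forall>m. m \<ge> i \<longrightarrow> g (p m) = p (m + c))"
      using 1 by (intro exI[of _ i] exI[of _ "j - i"]) simp
    then show ?thesis by blast
  next
    case 2
    have "\<forall>m. m \<ge> j \<longrightarrow> inv g (p m) = p (m + (i - j))"
    proof (intro allI impI)
      fix m assume m: "m \<ge> j"
      have "g (p (m - j + i)) = p (m - j + j)" by (rule ij)
      then have "inv g (p (m - j + j)) = p (m - j + i)" using g by (metis aut_inv_l')
      then show "inv g (p m) = p (m + (i - j))" using m 2 by simp
    qed
    then have "\<exists>i c. c > 0 \<and> (\<forall>m. m \<ge> i \<longrightarrow> inv g (p m) = p (m + c))"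
      using 2 by (intro exI[of _ j] exI[of _ "i - j"]) simp
    then show ?thesis by blast
  qed
qed

lemma fixes_end_inv_iff:
  assumes g: "g \<in> aut E"
  shows "fixes_end (inv g) s \<longleftrightarrow> fixes_end g s"
proof
  assume "fixes_end (inv g) s"
  then have "fixes_end (inv (inv g)) s" by (rule fixes_end_inv[OF aut_inv[OF g]])
  moreover have "inv (inv g) = g" using aut_bij[OF g] by (simp add: inv_inv_eq)
  ultimately show "fixes_end g s" by simp
qed (rule fixes_end_inv[OF g])

theorem proposition3p4:
  fixes E :: "'v \<Rightarrow> 'v \<Rightarrow> bool" and G :: "('v \<Rightarrow> 'v) set"
    and g :: "'v \<Rightarrow> 'v" and r1 r2 :: "nat \<Rightarrow> 'v"
  assumes "locally_finite_tree E"
    and "closed_subgroup E G"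
    and "g \<in> G" and "hyperbolic E g"
    and "ray E r1" and "ray E r2" and "\<not> ray_equiv r1 r2"
    and "fixes_end g r1" and "fixes_end g r2"
  shows "(openin (subtopology (aut_top E) G) (end_stab G r1) \<or>
          openin (subtopology (aut_top E) G) (end_stab G r2) \<longrightarrow>
          ((openin (subtopology (aut_top E) G) (end_stab G r1) \<and>
            openin (subtopology (aut_top E) G) (end_stab G r2)) \<longleftrightarrow> g \<in> G0 E G) \<and>
          (g \<in> G0 E G \<longleftrightarrow>
            (\<exists>U. compact_open_subgroup E G U \<and> conj_set g U = U)))
     \<and> (g \<in> G0 E G \<longrightarrow>
          (openin (subtopology (aut_top E) G) (end_stab G r1) \<longleftrightarrow>
           openin (subtopology (aut_top E) G) (end_stab G r2)))"
proof -
  note T = assms(1) and G = assms(2) and gG = assms(3) and hyp = assms(4)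
    and ray1 = assms(5) and ray2 = assms(6) and ne = assms(7) and fe1 = assms(8) and fe2 = assms(9)
  have G': "aut_subgroup E G" using G by (simp add: closed_subgroup_def)
  have g: "g \<in> aut E" using G' gG by (rule subg_aut)
  have giG: "inv g \<in> G" using G' gG by (rule subg_inv)
  have nf: "\<forall>x. g x \<noteq> x" using hyp by (simp add: hyperbolic_def)
  obtain s1 s2 where hs: "\<And>r. ray E r \<Longrightarrow> fixes_end g r \<Longrightarrow> ray_equiv r s1 \<or> ray_equiv r s2"
    using hyp unfolding hyperbolic_def by blast
  have hcl: "ray_equiv s r1 \<or> ray_equiv s r2" if "ray E s" "fixes_end g s" for s
  proof -
    have a1: "ray_equiv r1 s1 \<or> ray_equiv r1 s2" by (rule hs[OF ray1 fe1])
    have a2: "ray_equiv r2 s1 \<or> ray_equiv r2 s2" by (rule hs[OF ray2 fe2])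
    have a3: "ray_equiv s s1 \<or> ray_equiv s s2" by (rule hs[OF that])
    have "\<not> (ray_equiv r1 sk \<and> ray_equiv r2 sk)" for sk using ne re_trans re_sym by blast
    then show ?thesis using a1 a2 a3 re_trans re_sym by blast
  qed
  have hcl': "ray_equiv s r1 \<or> ray_equiv s r2" if "ray E s" "fixes_end a s" "a \<in> {g, inv g}" for s a
    using that hcl fixes_end_inv_iff[OF g] by auto
  define O1 where "O1 = openin (subtopology (aut_top E) G) (end_stab G r1)"
  define O2 where "O2 = openin (subtopology (aut_top E) G) (end_stab G r2)"
  define M where "M = (g \<in> G0 E G)"
  define N where "N = (\<exists>U. compact_open_subgroup E G U \<and> conj_set g U = U)"
  have Mdef: "M \<longleftrightarrow> modular_fn E G g = 1" using gG by (simp add: M_def G0_def)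
  have Ma: "modular_fn E G a = 1 \<longleftrightarrow> M" if "a \<in> {g, inv g}" for a
    using that Mdef mod_inv[OF T G gG] by auto
  have Na: "(\<exists>U. compact_open_subgroup E G U \<and> conj_set a U = U) \<longleftrightarrow> N" if "a \<in> {g, inv g}" for a
    using that N_inv[OF g, of G] by (auto simp: N_def)
  have aG: "a \<in> G" if "a \<in> {g, inv g}" for a using that gG giG by auto
  have aA: "a \<in> aut E" if "a \<in> {g, inv g}" for a using aG[OF that] G' subg_aut by blast
  have coreF: "(O_p \<and> M \<longrightarrow> O_q) \<and> (O_p \<and> O_q \<longrightarrow> N)"
    if rp: "ray E p" and fp: "fixes_end g p"
      and hpq: "\<And>s a. ray E s \<Longrightarrow> fixes_end a s \<Longrightarrow> a \<in> {g, inv g} \<Longrightarrow> ray_equiv s p \<or> ray_equiv s q"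
      and Op: "O_p = openin (subtopology (aut_top E) G) (end_stab G p)"
      and Oq: "O_q = openin (subtopology (aut_top E) G) (end_stab G q)"
    for p q O_p O_q
  proof -
    obtain a i c where aa: "a \<in> {g, inv g}" and c: "c > 0" and sh: "\<And>m. m \<ge> i \<Longrightarrow> a (p m) = p (m + c)"
      using direction[OF g nf fp] by blast
    interpret core E a p i c G q
      by unfold_locales (use T aA[OF aa] rp c sh G aG[OF aa] hpq[OF _ _ aa] in auto)
    show ?thesis
    proof (intro conjI impI)
      assume "O_p \<and> M"
      then show O_q using C1 Ma[OF aa] Op Oq by blast
    next
      assume "O_p \<and> O_q"
      then show N using C2 Na[OF aa] Op Oq by blast
    qed
  qed
  have c12: "(O1 \<and> M \<longrightarrow> O2) \<and> (O1 \<and> O2 \<longrightarrow> N)"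
    by (rule coreF[OF ray1 fe1 _ O1_def O2_def]) (use hcl' in blast)
  have c21: "(O2 \<and> M \<longrightarrow> O1) \<and> (O2 \<and> O1 \<longrightarrow> N)"
    by (rule coreF[OF ray2 fe2 _ O2_def O1_def]) (use hcl' in blast)
  have NM: "N \<longrightarrow> M"
  proof
    assume N
    then obtain U where U: "compact_open_subgroup E G U" "conj_set g U = U" by (auto simp: N_def)
    have V: "good E G U" by (rule cos_good[OF G' U(1)])
    have "modular_fn E G g = rho U U" using modular_eq[OF T G gG V] U(2) by simp
    also have "\<dots> = 1" using V rho_self[of E U] by (simp add: good_def)
    finally show M using Mdef by simp
  qed
  have "(O1 \<or> O2 \<longrightarrow> ((O1 \<and> O2) \<longleftrightarrow> M) \<and> (M \<longleftrightarrow> N)) \<and> (M \<longrightarrow> (O1 \<longleftrightarrow> O2))"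
    using c12 c21 NM by blast
  then show ?thesis unfolding O1_def O2_def M_def N_def .
qed

end
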